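(* Given a linear-non-linear adjunction $\mathcal F\dashv\mathcal U$, define $\mathcal U^S:LS(\mathscr C)\to S(\mathscr C)$ by $\mathcal U^S(X,A):=(X,\mathcal U(A))$ and, for $(f,u):(X,A)\to(Y,B)$, $\mathcal U^S(f,u):=(f,(\eta_X\times\mathrm{id}_{\mathcal U(A)});n_{\mathcal F(X),A};\mathcal U(u))$. Then $\mathcal U^S$ is a functor and a split fibred functor from $\mathbf{ls}$ to $\mathbf s$ (i.e. $\mathbf s\circ\mathcal U^S=\mathbf{ls}$ and $\mathcal U^S$ sends the chosen cartesian morphisms of $\mathbf{ls}$ to those of $\mathbf s$). Moreover, on each fibre over $X$ it is a symmetric lax monoidal functor from $(LS(\mathscr C)_X,\otimes_X,(X,1))$ to $(S(\mathscr C)_X,\times_X,(X,I))$, with structure maps $(\mathrm{id}_X,\pi_2;n_I):(X,I)\to\mathcal U^S(X,1)$ and $(\mathrm{id}_X,\pi_2;n_{A,B}):\mathcal U^S(X,A)\times_X\mathcal U^S(X,B)\to\mathcal U^S((X,A)\otimes_X(X,B))$.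
   Context: Composition is diagrammatic; monoidal categories are strict. A linear-non-linear adjunction is a symmetric monoidal adjunction $\mathcal F\dashv\mathcal U$, $\mathcal F:\mathscr C\to\mathcal L$, between a cartesian category $(\mathscr C,\times,I)$ and a symmetric monoidal category $(\mathcal L,\otimes,1)$ (symmetry $\sigma$); $\mathcal U$ lax monoidal via $n_{A,B}:\mathcal U(A)\times\mathcal U(B)\to\mathcal U(A\otimes B)$, $n_I:I\to\mathcal U(1)$; $\mathcal F$ strong monoidal via isomorphisms $m_{X,Y}:\mathcal F(X)\otimes\mathcal F(Y)\to\mathcal F(X\times Y)$, $m_1:1\to\mathcal F(I)$; unit $\eta$. $\mathbf c_X:=\mathcal F(\Delta_X);m_{X,X}^{-1}$, $\mathbf w_X:=\mathcal F(t_X);m_1^{-1}$ with $t_X:X\to I$ terminal. Simple category $S(\mathscr C)$: objects $(X,J)$, $X,J\in\mathscr C$; morphisms $(f,u):(X,J)\to(Y,K)$ with $f:X\to Y$, $u:X\times J\to K$; composition $(f,u);(g,v)=(f;g,(\Delta_X\times\mathrm{id}_J);(f\times u);v)$, identity $(\mathrm{id}_X,\pi_2)$; split fibration $\mathbf s(f,u)=f$ with chosen cartesian morphisms $(f,\pi_2):(X,K)\to(Y,K)$; fibre $S(\mathscr C)_X$ (morphisms $(\mathrm{id}_X,u)$) has cartesian product $(X,J)\times_X(X,K)=(X,J\times K)$, unit $(X,I)$. Linear simple category $LS(\mathscr C)$: objects $(X,A)$, $X\in\mathscr C$, $A\in\mathcal L$; morphisms $(f,u):(X,A)\to(Y,B)$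 with $f:X\to Y$, $u:\mathcal F(X)\otimes A\to B$; composition $(f,u);(g,v)=(f;g,(\mathbf c_X\otimes\mathrm{id}_A);(\mathcal F(f)\otimes u);v)$, identity $(\mathrm{id}_X,\mathbf w_X\otimes\mathrm{id}_A)$; split fibration $\mathbf{ls}(f,u)=f$ with chosen cartesian morphisms $(f,\mathbf w_X\otimes\mathrm{id}_B):(X,B)\to(Y,B)$; fibre $LS(\mathscr C)_X$ has objects $(X,A)$, morphisms $(\mathrm{id}_X,u)$, and monoidal structure $(X,A)\otimes_X(X,B)=(X,A\otimes B)$, unit $(X,1)$, $(\mathrm{id}_X,u)\otimes_X(\mathrm{id}_X,v)=(\mathrm{id}_X,(\mathbf c_X\otimes\mathrm{id}_{A\otimes B});(\mathrm{id}_{\mathcal F(X)}\otimes\sigma_{\mathcal F(X),A}\otimes\mathrm{id}_B);(u\otimes v))$. *)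

theory Defs
  imports Main
begin

section \<open>Categories (explicit carriers, diagrammatic composition)\<close>

record ('o,'m) cat =
  cOb  :: "'o set"
  cAr  :: "'m set"
  cDom :: "'m \<Rightarrow> 'o"
  cCod :: "'m \<Rightarrow> 'o"
  cId  :: "'o \<Rightarrow> 'm"
  cCmp :: "'m \<Rightarrow> 'm \<Rightarrow> 'm"  \<comment> \<open>cCmp C f g = f;g (first f, then g)\<close>

definition hom :: "('o,'m,'x) cat_scheme \<Rightarrow> 'o \<Rightarrow> 'o \<Rightarrow> 'm set" where
  "hom C a b = {f \<in> cAr C. cDom C f = a \<and> cCod C f = b}"

definition category :: "('o,'m,'x) cat_scheme \<Rightarrow> bool" where
  "category C \<longleftrightarrow>
     (\<forall>f\<in>cAr C. cDom C f \<in> cOb C \<and> cCod C f \<in> cOb C) \<and>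
     (\<forall>a\<in>cOb C. cId C a \<in> hom C a a) \<and>
     (\<forall>f\<in>cAr C. \<forall>g\<in>cAr C. cCod C f = cDom C g \<longrightarrow>
         cCmp C f g \<in> hom C (cDom C f) (cCod C g)) \<and>
     (\<forall>f\<in>cAr C. cCmp C (cId C (cDom C f)) f = f \<and> cCmp C f (cId C (cCod C f)) = f) \<and>
     (\<forall>f\<in>cAr C. \<forall>g\<in>cAr C. \<forall>h\<in>cAr C. cCod C f = cDom C g \<longrightarrow> cCod C g = cDom C h \<longrightarrow>
         cCmp C (cCmp C f g) h = cCmp C f (cCmp C g h))"

definition inverse_arr :: "('o,'m,'x) cat_scheme \<Rightarrow> 'm \<Rightarrow> 'm \<Rightarrow> bool" where
  "inverse_arr C f g \<longleftrightarrow> f \<in> cAr C \<and> g \<in> cAr C \<and> cDom C g = cCod C f \<and> cCod C g = cDom C f \<and>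
     cCmp C f g = cId C (cDom C f) \<and> cCmp C g f = cId C (cCod C f)"

definition is_iso :: "('o,'m,'x) cat_scheme \<Rightarrow> 'm \<Rightarrow> bool" where
  "is_iso C f \<longleftrightarrow> (\<exists>g. inverse_arr C f g)"

definition inv_arr :: "('o,'m,'x) cat_scheme \<Rightarrow> 'm \<Rightarrow> 'm" where
  "inv_arr C f = (SOME g. inverse_arr C f g)"

definition is_functor :: "('o,'m,'x) cat_scheme \<Rightarrow> ('p,'n,'y) cat_scheme \<Rightarrow>
    ('o \<Rightarrow> 'p) \<Rightarrow> ('m \<Rightarrow> 'n) \<Rightarrow> bool" where
  "is_functor A B Fo Fm \<longleftrightarrow>
     (\<forall>a\<in>cOb A. Fo a \<in> cOb B) \<and>
     (\<forall>f\<in>cAr A. Fm f \<in> hom B (Fo (cDom A f)) (Fo (cCod A f))) \<and>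
     (\<forall>a\<in>cOb A. Fm (cId A a) = cId B (Fo a)) \<and>
     (\<forall>f\<in>cAr A. \<forall>g\<in>cAr A. cCod A f = cDom A g \<longrightarrow> Fm (cCmp A f g) = cCmp B (Fm f) (Fm g))"

definition nat_trans :: "('o,'m,'x) cat_scheme \<Rightarrow> ('p,'n,'y) cat_scheme \<Rightarrow>
    ('o \<Rightarrow> 'p) \<Rightarrow> ('m \<Rightarrow> 'n) \<Rightarrow> ('o \<Rightarrow> 'p) \<Rightarrow> ('m \<Rightarrow> 'n) \<Rightarrow> ('o \<Rightarrow> 'n) \<Rightarrow> bool" where
  "nat_trans A B Fo Fm Go Gm \<tau> \<longleftrightarrow>
     (\<forall>a\<in>cOb A. \<tau> a \<in> hom B (Fo a) (Go a)) \<and>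
     (\<forall>f\<in>cAr A. cCmp B (Fm f) (\<tau> (cCod A f)) = cCmp B (\<tau> (cDom A f)) (Gm f))"

section \<open>Strict symmetric monoidal categories and symmetric lax monoidal functors\<close>

record ('o,'m) smc = "('o,'m) cat" +
  mTns  :: "'o \<Rightarrow> 'o \<Rightarrow> 'o"
  mTnsA :: "'m \<Rightarrow> 'm \<Rightarrow> 'm"
  mUnt  :: "'o"
  mSym  :: "'o \<Rightarrow> 'o \<Rightarrow> 'm"

definition strict_smc :: "('o,'m,'x) smc_scheme \<Rightarrow> bool" where
  "strict_smc L \<longleftrightarrow> category L \<and>
     mUnt L \<in> cOb L \<and>
     (\<forall>a\<in>cOb L. \<forall>b\<in>cOb L. mTns L a b \<in> cOb L) \<and>
     (\<forall>f\<in>cAr L. \<forall>g\<in>cAr L. mTnsA L f g \<in>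
         hom L (mTns L (cDom L f) (cDom L g)) (mTns L (cCod L f) (cCod L g))) \<and>
     (\<forall>a\<in>cOb L. \<forall>b\<in>cOb L. mTnsA L (cId L a) (cId L b) = cId L (mTns L a b)) \<and>
     (\<forall>f\<in>cAr L. \<forall>f'\<in>cAr L. \<forall>g\<in>cAr L. \<forall>g'\<in>cAr L.
         cCod L f = cDom L f' \<longrightarrow> cCod L g = cDom L g' \<longrightarrow>
         mTnsA L (cCmp L f f') (cCmp L g g') = cCmp L (mTnsA L f g) (mTnsA L f' g')) \<and>
     (\<forall>a\<in>cOb L. \<forall>b\<in>cOb L. \<forall>c\<in>cOb L. mTns L (mTns L a b) c = mTns L a (mTns L b c)) \<and>
     (\<forall>a\<in>cOb L. mTns L (mUnt L) a = a \<and> mTns L a (mUnt L) = a) \<and>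
     (\<forall>f\<in>cAr L. \<forall>g\<in>cAr L. \<forall>h\<in>cAr L. mTnsA L (mTnsA L f g) h = mTnsA L f (mTnsA L g h)) \<and>
     (\<forall>f\<in>cAr L. mTnsA L (cId L (mUnt L)) f = f \<and> mTnsA L f (cId L (mUnt L)) = f) \<and>
     (\<forall>a\<in>cOb L. \<forall>b\<in>cOb L. mSym L a b \<in> hom L (mTns L a b) (mTns L b a)) \<and>
     (\<forall>f\<in>cAr L. \<forall>g\<in>cAr L. cCmp L (mTnsA L f g) (mSym L (cCod L f) (cCod L g)) =
         cCmp L (mSym L (cDom L f) (cDom L g)) (mTnsA L g f)) \<and>
     (\<forall>a\<in>cOb L. \<forall>b\<in>cOb L. cCmp L (mSym L a b) (mSym L b a) = cId L (mTns L a b)) \<and>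
     (\<forall>a\<in>cOb L. \<forall>b\<in>cOb L. \<forall>c\<in>cOb L. mSym L a (mTns L b c) =
         cCmp L (mTnsA L (mSym L a b) (cId L c)) (mTnsA L (cId L b) (mSym L a c)))"

definition sym_lax_monoidal :: "('o,'m,'x) smc_scheme \<Rightarrow> ('p,'n,'y) smc_scheme \<Rightarrow>
    ('o \<Rightarrow> 'p) \<Rightarrow> ('m \<Rightarrow> 'n) \<Rightarrow> ('o \<Rightarrow> 'o \<Rightarrow> 'n) \<Rightarrow> 'n \<Rightarrow> bool" where
  "sym_lax_monoidal A B Go Gm \<phi> \<phi>0 \<longleftrightarrow>
     is_functor A B Go Gm \<and>
     (\<forall>a\<in>cOb A. \<forall>b\<in>cOb A. \<phi> a b \<in> hom B (mTns B (Go a) (Go b)) (Go (mTns A a b))) \<and>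
     \<phi>0 \<in> hom B (mUnt B) (Go (mUnt A)) \<and>
     (\<forall>f\<in>cAr A. \<forall>g\<in>cAr A.
        cCmp B (mTnsA B (Gm f) (Gm g)) (\<phi> (cCod A f) (cCod A g)) =
        cCmp B (\<phi> (cDom A f) (cDom A g)) (Gm (mTnsA A f g))) \<and>
     (\<forall>a\<in>cOb A. \<forall>b\<in>cOb A. \<forall>c\<in>cOb A.
        cCmp B (mTnsA B (\<phi> a b) (cId B (Go c))) (\<phi> (mTns A a b) c) =
        cCmp B (mTnsA B (cId B (Go a)) (\<phi> b c)) (\<phi> a (mTns A b c))) \<and>
     (\<forall>a\<in>cOb A. cCmp B (mTnsA B \<phi>0 (cId B (Go a))) (\<phi> (mUnt A) a) = cId B (Go a)) \<and>
     (\<forall>a\<in>cOb A. cCmp B (mTnsA B (cId B (Go a)) \<phi>0) (\<phi> a (mUnt A)) = cId B (Go a)) \<and>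
     (\<forall>a\<in>cOb A. \<forall>b\<in>cOb A.
        cCmp B (mSym B (Go a) (Go b)) (\<phi> b a) = cCmp B (\<phi> a b) (Gm (mSym A a b)))"

record ('o,'m) ccat = "('o,'m) cat" +
  pProd :: "'o \<Rightarrow> 'o \<Rightarrow> 'o"
  pTrm  :: "'o"
  pPr1  :: "'o \<Rightarrow> 'o \<Rightarrow> 'm"
  pPr2  :: "'o \<Rightarrow> 'o \<Rightarrow> 'm"
  pPair :: "'m \<Rightarrow> 'm \<Rightarrow> 'm"
  pBang :: "'o \<Rightarrow> 'm"

definition prod_arr :: "('o,'m) ccat \<Rightarrow> 'm \<Rightarrow> 'm \<Rightarrow> 'm" where
  "prod_arr C f g = pPair C (cCmp C (pPr1 C (cDom C f) (cDom C g)) f)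
                            (cCmp C (pPr2 C (cDom C f) (cDom C g)) g)"

definition diag :: "('o,'m) ccat \<Rightarrow> 'o \<Rightarrow> 'm" where
  "diag C X = pPair C (cId C X) (cId C X)"

definition cswap :: "('o,'m) ccat \<Rightarrow> 'o \<Rightarrow> 'o \<Rightarrow> 'm" where
  "cswap C X Y = pPair C (pPr2 C X Y) (pPr1 C X Y)"

definition cartesian_category :: "('o,'m) ccat \<Rightarrow> bool" where
  "cartesian_category C \<longleftrightarrow> category C \<and>
     pTrm C \<in> cOb C \<and>
     (\<forall>X\<in>cOb C. pBang C X \<in> hom C X (pTrm C)) \<and>
     (\<forall>X\<in>cOb C. \<forall>f\<in>hom C X (pTrm C). f = pBang C X) \<and>
     (\<forall>X\<in>cOb C. \<forall>Y\<in>cOb C. pProd C X Y \<in> cOb C \<and>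
         pPr1 C X Y \<in> hom C (pProd C X Y) X \<and> pPr2 C X Y \<in> hom C (pProd C X Y) Y) \<and>
     (\<forall>f\<in>cAr C. \<forall>g\<in>cAr C. cDom C f = cDom C g \<longrightarrow>
         pPair C f g \<in> hom C (cDom C f) (pProd C (cCod C f) (cCod C g)) \<and>
         cCmp C (pPair C f g) (pPr1 C (cCod C f) (cCod C g)) = f \<and>
         cCmp C (pPair C f g) (pPr2 C (cCod C f) (cCod C g)) = g) \<and>
     (\<forall>X\<in>cOb C. \<forall>Y\<in>cOb C. \<forall>h\<in>cAr C. cCod C h = pProd C X Y \<longrightarrow>
         h = pPair C (cCmp C h (pPr1 C X Y)) (cCmp C h (pPr2 C X Y))) \<and>
     \<comment> \<open>strictness of the cartesian monoidal structure\<close>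
     (\<forall>X\<in>cOb C. \<forall>Y\<in>cOb C. \<forall>Z\<in>cOb C.
         pProd C (pProd C X Y) Z = pProd C X (pProd C Y Z) \<and>
         pPair C (cCmp C (pPr1 C (pProd C X Y) Z) (pPr1 C X Y))
                 (pPair C (cCmp C (pPr1 C (pProd C X Y) Z) (pPr2 C X Y)) (pPr2 C (pProd C X Y) Z))
           = cId C (pProd C (pProd C X Y) Z)) \<and>
     (\<forall>X\<in>cOb C. pProd C (pTrm C) X = X \<and> pProd C X (pTrm C) = X \<and>
         pPr2 C (pTrm C) X = cId C X \<and> pPr1 C X (pTrm C) = cId C X)"

definition cart_smc :: "('o,'m) ccat \<Rightarrow> ('o,'m) smc" where
  "cart_smc C = \<lparr>cOb = cOb C, cAr = cAr C, cDom = cDom C, cCod = cCod C, cId = cId C, cCmp = cCmp C,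
     mTns = pProd C, mTnsA = prod_arr C, mUnt = pTrm C, mSym = cswap C\<rparr>"

section \<open>Linear-non-linear adjunctions\<close>

definition lnl_adjunction :: "('o,'m) ccat \<Rightarrow> ('p,'n) smc \<Rightarrow>
    ('o \<Rightarrow> 'p) \<Rightarrow> ('m \<Rightarrow> 'n) \<Rightarrow> ('p \<Rightarrow> 'o) \<Rightarrow> ('n \<Rightarrow> 'm) \<Rightarrow>
    ('o \<Rightarrow> 'o \<Rightarrow> 'n) \<Rightarrow> 'n \<Rightarrow> ('p \<Rightarrow> 'p \<Rightarrow> 'm) \<Rightarrow> 'm \<Rightarrow> ('o \<Rightarrow> 'm) \<Rightarrow> ('p \<Rightarrow> 'n) \<Rightarrow> bool" where
  "lnl_adjunction C L Fo Fm Uo Um m m1 n n1 \<eta> \<epsilon> \<longleftrightarrow>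
     cartesian_category C \<and> strict_smc L \<and>
     \<comment> \<open>F -| U with unit eta and counit epsilon\<close>
     is_functor C L Fo Fm \<and> is_functor L C Uo Um \<and>
     nat_trans C C (\<lambda>X. X) (\<lambda>f. f) (\<lambda>X. Uo (Fo X)) (\<lambda>f. Um (Fm f)) \<eta> \<and>
     nat_trans L L (\<lambda>A. Fo (Uo A)) (\<lambda>f. Fm (Um f)) (\<lambda>A. A) (\<lambda>f. f) \<epsilon> \<and>
     (\<forall>X\<in>cOb C. cCmp L (Fm (\<eta> X)) (\<epsilon> (Fo X)) = cId L (Fo X)) \<and>
     (\<forall>A\<in>cOb L. cCmp C (\<eta> (Uo A)) (Um (\<epsilon> A)) = cId C (Uo A)) \<and>
     \<comment> \<open>F strong symmetric monoidal via m, m1\<close>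
     sym_lax_monoidal (cart_smc C) L Fo Fm m m1 \<and>
     (\<forall>X\<in>cOb C. \<forall>Y\<in>cOb C. is_iso L (m X Y)) \<and> is_iso L m1 \<and>
     \<comment> \<open>U lax symmetric monoidal via n, n1\<close>
     sym_lax_monoidal L (cart_smc C) Uo Um n n1 \<and>
     \<comment> \<open>the adjunction is monoidal: unit and counit are monoidal natural transformations\<close>
     (\<forall>X\<in>cOb C. \<forall>Y\<in>cOb C.
        cCmp C (prod_arr C (\<eta> X) (\<eta> Y)) (cCmp C (n (Fo X) (Fo Y)) (Um (m X Y))) = \<eta> (pProd C X Y)) \<and>
     cCmp C n1 (Um m1) = \<eta> (pTrm C) \<and>
     (\<forall>A\<in>cOb L. \<forall>B\<in>cOb L.
        cCmp L (m (Uo A) (Uo B)) (cCmp L (Fm (n A B)) (\<epsilon> (mTns L A B))) = mTnsA L (\<epsilon> A) (\<epsilon> B)) \<and>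
     cCmp L m1 (cCmp L (Fm n1) (\<epsilon> (mUnt L))) = cId L (mUnt L)"

definition copy :: "('o,'m) ccat \<Rightarrow> ('p,'n) smc \<Rightarrow> ('m \<Rightarrow> 'n) \<Rightarrow> ('o \<Rightarrow> 'o \<Rightarrow> 'n) \<Rightarrow> 'o \<Rightarrow> 'n" where
  "copy C L Fm m X = cCmp L (Fm (diag C X)) (inv_arr L (m X X))"

definition weak :: "('o,'m) ccat \<Rightarrow> ('p,'n) smc \<Rightarrow> ('m \<Rightarrow> 'n) \<Rightarrow> 'n \<Rightarrow> 'o \<Rightarrow> 'n" where
  "weak C L Fm m1 X = cCmp L (Fm (pBang C X)) (inv_arr L m1)"

section \<open>Simple and linear simple categories\<close>

text \<open>A morphism (f,u) : a -> b is represented as the triple (a, b, (f, u)).\<close>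

definition src :: "'a \<times> 'a \<times> 'c \<Rightarrow> 'a" where "src t = fst t"
definition tgt :: "'a \<times> 'a \<times> 'c \<Rightarrow> 'a" where "tgt t = fst (snd t)"
definition base :: "'a \<times> 'a \<times> ('m \<times> 'n) \<Rightarrow> 'm" where "base t = fst (snd (snd t))"
definition fibc :: "'a \<times> 'a \<times> ('m \<times> 'n) \<Rightarrow> 'n" where "fibc t = snd (snd (snd t))"

definition Scat :: "('o,'m) ccat \<Rightarrow> ('o \<times> 'o, ('o \<times> 'o) \<times> ('o \<times> 'o) \<times> ('m \<times> 'm)) cat" where
  "Scat C = \<lparr>
     cOb = cOb C \<times> cOb C,
     cAr = {((X,J),(Y,K),(f,u)) | X J Y K f u. X \<in> cOb C \<and> J \<in> cOb C \<and> Y \<in> cOb C \<and> K \<in> cOb C \<and>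
              f \<in> hom C X Y \<and> u \<in> hom C (pProd C X J) K},
     cDom = src, cCod = tgt,
     cId = (\<lambda>a. (a, a, (cId C (fst a), pPr2 C (fst a) (snd a)))),
     cCmp = (\<lambda>\<phi> \<psi>. (src \<phi>, tgt \<psi>, (cCmp C (base \<phi>) (base \<psi>),
        cCmp C (cCmp C (prod_arr C (diag C (fst (src \<phi>))) (cId C (snd (src \<phi>))))
                       (prod_arr C (base \<phi>) (fibc \<phi>))) (fibc \<psi>))))\<rparr>"

text \<open>Chosen cartesian morphism of s over f : X -> Y at K: (f, pi2) : (X,K) -> (Y,K).\<close>
definition scart :: "('o,'m) ccat \<Rightarrow> 'm \<Rightarrow> 'o \<Rightarrow> ('o \<times> 'o) \<times> ('o \<times> 'o) \<times> ('m \<times> 'm)" where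
  "scart C f K = ((cDom C f, K), (cCod C f, K), (f, pPr2 C (cDom C f) K))"

definition LScat :: "('o,'m) ccat \<Rightarrow> ('p,'n) smc \<Rightarrow> ('o \<Rightarrow> 'p) \<Rightarrow> ('m \<Rightarrow> 'n) \<Rightarrow>
    ('o \<Rightarrow> 'o \<Rightarrow> 'n) \<Rightarrow> 'n \<Rightarrow> ('o \<times> 'p, ('o \<times> 'p) \<times> ('o \<times> 'p) \<times> ('m \<times> 'n)) cat" where
  "LScat C L Fo Fm m m1 = \<lparr>
     cOb = cOb C \<times> cOb L,
     cAr = {((X,A),(Y,B),(f,u)) | X A Y B f u. X \<in> cOb C \<and> A \<in> cOb L \<and> Y \<in> cOb C \<and> B \<in> cOb L \<and>
              f \<in> hom C X Y \<and> u \<in> hom L (mTns L (Fo X) A) B},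
     cDom = src, cCod = tgt,
     cId = (\<lambda>a. (a, a, (cId C (fst a), mTnsA L (weak C L Fm m1 (fst a)) (cId L (snd a))))),
     cCmp = (\<lambda>\<phi> \<psi>. (src \<phi>, tgt \<psi>, (cCmp C (base \<phi>) (base \<psi>),
        cCmp L (cCmp L (mTnsA L (copy C L Fm m (fst (src \<phi>))) (cId L (snd (src \<phi>))))
                       (mTnsA L (Fm (base \<phi>)) (fibc \<phi>))) (fibc \<psi>))))\<rparr>"

text \<open>Chosen cartesian morphism of ls over f : X -> Y at B: (f, w_X (x) id_B) : (X,B) -> (Y,B).\<close>
definition lscart :: "('o,'m) ccat \<Rightarrow> ('p,'n) smc \<Rightarrow> ('m \<Rightarrow> 'n) \<Rightarrow> 'n \<Rightarrow> 'm \<Rightarrow> 'p \<Rightarrow>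
    ('o \<times> 'p) \<times> ('o \<times> 'p) \<times> ('m \<times> 'n)" where
  "lscart C L Fm m1 f B = ((cDom C f, B), (cCod C f, B), (f, mTnsA L (weak C L Fm m1 (cDom C f)) (cId L B)))"

definition Sfib :: "('o,'m) ccat \<Rightarrow> 'o \<Rightarrow> ('o \<times> 'o, ('o \<times> 'o) \<times> ('o \<times> 'o) \<times> ('m \<times> 'm)) smc" where
  "Sfib C X = \<lparr>
     cOb = {X} \<times> cOb C,
     cAr = {\<phi> \<in> cAr (Scat C). fst (src \<phi>) = X \<and> fst (tgt \<phi>) = X \<and> base \<phi> = cId C X},
     cDom = cDom (Scat C), cCod = cCod (Scat C), cId = cId (Scat C), cCmp = cCmp (Scat C),
     mTns = (\<lambda>a b. (X, pProd C (snd a) (snd b))),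
     mTnsA = (\<lambda>\<phi> \<psi>. ((X, pProd C (snd (src \<phi>)) (snd (src \<psi>))), (X, pProd C (snd (tgt \<phi>)) (snd (tgt \<psi>))),
        (cId C X, pPair C
           (cCmp C (prod_arr C (cId C X) (pPr1 C (snd (src \<phi>)) (snd (src \<psi>)))) (fibc \<phi>))
           (cCmp C (prod_arr C (cId C X) (pPr2 C (snd (src \<phi>)) (snd (src \<psi>)))) (fibc \<psi>))))),
     mUnt = (X, pTrm C),
     mSym = (\<lambda>a b. ((X, pProd C (snd a) (snd b)), (X, pProd C (snd b) (snd a)),
        (cId C X, cCmp C (pPr2 C X (pProd C (snd a) (snd b))) (cswap C (snd a) (snd b)))))\<rparr>"

definition LSfib :: "('o,'m) ccat \<Rightarrow> ('p,'n) smc \<Rightarrow> ('o \<Rightarrow> 'p) \<Rightarrow> ('m \<Rightarrow> 'n) \<Rightarrow>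
    ('o \<Rightarrow> 'o \<Rightarrow> 'n) \<Rightarrow> 'n \<Rightarrow> 'o \<Rightarrow> ('o \<times> 'p, ('o \<times> 'p) \<times> ('o \<times> 'p) \<times> ('m \<times> 'n)) smc" where
  "LSfib C L Fo Fm m m1 X = (let LS = LScat C L Fo Fm m m1 in \<lparr>
     cOb = {X} \<times> cOb L,
     cAr = {\<phi> \<in> cAr LS. fst (src \<phi>) = X \<and> fst (tgt \<phi>) = X \<and> base \<phi> = cId C X},
     cDom = cDom LS, cCod = cCod LS, cId = cId LS, cCmp = cCmp LS,
     mTns = (\<lambda>a b. (X, mTns L (snd a) (snd b))),
     mTnsA = (\<lambda>\<phi> \<psi>. ((X, mTns L (snd (src \<phi>)) (snd (src \<psi>))), (X, mTns L (snd (tgt \<phi>)) (snd (tgt \<psi>))),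
        (cId C X,
         cCmp L (cCmp L (mTnsA L (copy C L Fm m X) (cId L (mTns L (snd (src \<phi>)) (snd (src \<psi>)))))
                        (mTnsA L (mTnsA L (cId L (Fo X)) (mSym L (Fo X) (snd (src \<phi>)))) (cId L (snd (src \<psi>)))))
                (mTnsA L (fibc \<phi>) (fibc \<psi>))))),
     mUnt = (X, mUnt L),
     mSym = (\<lambda>a b. ((X, mTns L (snd a) (snd b)), (X, mTns L (snd b) (snd a)),
        (cId C X, mTnsA L (weak C L Fm m1 X) (mSym L (snd a) (snd b)))))\<rparr>)"

section \<open>The functor U^S and its monoidal structure maps\<close>

definition USo :: "('p \<Rightarrow> 'o) \<Rightarrow> 'o \<times> 'p \<Rightarrow> 'o \<times> 'o" where
  "USo Uo a = (fst a, Uo (snd a))"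

definition USm :: "('o,'m) ccat \<Rightarrow> ('o \<Rightarrow> 'p) \<Rightarrow> ('p \<Rightarrow> 'o) \<Rightarrow> ('n \<Rightarrow> 'm) \<Rightarrow>
    ('p \<Rightarrow> 'p \<Rightarrow> 'm) \<Rightarrow> ('o \<Rightarrow> 'm) \<Rightarrow>
    ('o \<times> 'p) \<times> ('o \<times> 'p) \<times> ('m \<times> 'n) \<Rightarrow> ('o \<times> 'o) \<times> ('o \<times> 'o) \<times> ('m \<times> 'm)" where
  "USm C Fo Uo Um n \<eta> \<phi> = (USo Uo (src \<phi>), USo Uo (tgt \<phi>), (base \<phi>,
     cCmp C (cCmp C (prod_arr C (\<eta> (fst (src \<phi>))) (cId C (Uo (snd (src \<phi>)))))
                    (n (Fo (fst (src \<phi>))) (snd (src \<phi>))))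
            (Um (fibc \<phi>))))"

definition US_unit :: "('o,'m) ccat \<Rightarrow> ('p,'n) smc \<Rightarrow> ('p \<Rightarrow> 'o) \<Rightarrow> 'm \<Rightarrow> 'o \<Rightarrow>
    ('o \<times> 'o) \<times> ('o \<times> 'o) \<times> ('m \<times> 'm)" where
  "US_unit C L Uo n1 X = ((X, pTrm C), (X, Uo (mUnt L)), (cId C X, cCmp C (pPr2 C X (pTrm C)) n1))"

definition US_mult :: "('o,'m) ccat \<Rightarrow> ('p,'n) smc \<Rightarrow> ('p \<Rightarrow> 'o) \<Rightarrow> ('p \<Rightarrow> 'p \<Rightarrow> 'm) \<Rightarrow> 'o \<Rightarrow>
    'o \<times> 'p \<Rightarrow> 'o \<times> 'p \<Rightarrow> ('o \<times> 'o) \<times> ('o \<times> 'o) \<times> ('m \<times> 'm)" where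
  "US_mult C L Uo n X a b =
     ((X, pProd C (Uo (snd a)) (Uo (snd b))), (X, Uo (mTns L (snd a) (snd b))),
      (cId C X, cCmp C (pPr2 C X (pProd C (Uo (snd a)) (Uo (snd b)))) (n (snd a) (snd b))))"

end

theory Submission
  imports Defs
begin

locale lnl =
  fixes C :: "('o,'m) ccat" and L :: "('p,'n) smc"
    and Fo :: "'o \<Rightarrow> 'p" and Fm :: "'m \<Rightarrow> 'n" and Uo :: "'p \<Rightarrow> 'o" and Um :: "'n \<Rightarrow> 'm"
    and m :: "'o \<Rightarrow> 'o \<Rightarrow> 'n" and m1 :: "'n" and n :: "'p \<Rightarrow> 'p \<Rightarrow> 'm" and n1 :: "'m"
    and \<eta> :: "'o \<Rightarrow> 'm" and \<epsilon> :: "'p \<Rightarrow> 'n"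
  assumes lnl: "lnl_adjunction C L Fo Fm Uo Um m m1 n n1 \<eta> \<epsilon>"
begin

abbreviation cmp (infixr "\<cdot>" 75) where "f \<cdot> g \<equiv> cCmp C f g"
abbreviation "Ar f \<equiv> f \<in> cAr C"
abbreviation "Ob X \<equiv> X \<in> cOb C"
abbreviation "dm f \<equiv> cDom C f"
abbreviation "cd f \<equiv> cCod C f"
abbreviation "pr1 \<equiv> pPr1 C"
abbreviation "pr2 \<equiv> pPr2 C"
abbreviation "pair \<equiv> pPair C"
abbreviation "prd \<equiv> pProd C"
abbreviation "trm \<equiv> pTrm C"
abbreviation "bang \<equiv> pBang C"
abbreviation "idC \<equiv> cId C"

abbreviation lcmp (infixr "\<bullet>" 75) where "f \<bullet> g \<equiv> cCmp L f g"
abbreviation "ArL f \<equiv> f \<in> cAr L"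
abbreviation "ObL X \<equiv> X \<in> cOb L"
abbreviation "dL f \<equiv> cDom L f"
abbreviation "cL f \<equiv> cCod L f"
abbreviation "idL \<equiv> cId L"
abbreviation tns (infixr "\<otimes>" 80) where "a \<otimes> b \<equiv> mTns L a b"
abbreviation tnsA (infixr "\<oplus>" 80) where "f \<oplus> g \<equiv> mTnsA L f g"

lemma cart: "cartesian_category C" and smc: "strict_smc L"
  and FF: "is_functor C L Fo Fm" and UF: "is_functor L C Uo Um"
  and etaN: "nat_trans C C (\<lambda>X. X) (\<lambda>f. f) (\<lambda>X. Uo (Fo X)) (\<lambda>f. Um (Fm f)) \<eta>"
  and Fmon: "sym_lax_monoidal (cart_smc C) L Fo Fm m m1"
  and miso: "\<forall>X\<in>cOb C. \<forall>Y\<in>cOb C. is_iso L (m X Y)" and m1iso: "is_iso L m1"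
  and Umon: "sym_lax_monoidal L (cart_smc C) Uo Um n n1"
  and etam: "\<forall>X\<in>cOb C. \<forall>Y\<in>cOb C.
        cCmp C (prod_arr C (\<eta> X) (\<eta> Y)) (cCmp C (n (Fo X) (Fo Y)) (Um (m X Y))) = \<eta> (pProd C X Y)"
  and etam1: "cCmp C n1 (Um m1) = \<eta> (pTrm C)"
  using lnl unfolding lnl_adjunction_def by auto

lemma catC: "category C" using cart unfolding cartesian_category_def by auto
lemma catL: "category L" using smc unfolding strict_smc_def by auto

lemma C_dom[simp]: "Ar f \<Longrightarrow> Ob (dm f)" and C_cod[simp]: "Ar f \<Longrightarrow> Ob (cd f)"
  using catC unfolding category_def by auto
lemma C_id[simp]: "Ob X \<Longrightarrow> Ar (idC X)" "Ob X \<Longrightarrow> dm (idC X) = X" "Ob X \<Longrightarrow> cd (idC X) = X"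
  using catC unfolding category_def hom_def by auto
lemma C_comp[simp]: "Ar f \<Longrightarrow> Ar g \<Longrightarrow> cd f = dm g \<Longrightarrow> Ar (f \<cdot> g)"
  "Ar f \<Longrightarrow> Ar g \<Longrightarrow> cd f = dm g \<Longrightarrow> dm (f \<cdot> g) = dm f"
  "Ar f \<Longrightarrow> Ar g \<Longrightarrow> cd f = dm g \<Longrightarrow> cd (f \<cdot> g) = cd g"
  using catC unfolding category_def hom_def by auto
lemma C_idl[simp]: "Ar f \<Longrightarrow> X = dm f \<Longrightarrow> idC X \<cdot> f = f"
  and C_idr[simp]: "Ar f \<Longrightarrow> X = cd f \<Longrightarrow> f \<cdot> idC X = f"
  using catC unfolding category_def by auto
lemma C_assoc[simp]: "Ar f \<Longrightarrow> Ar g \<Longrightarrow> Ar h \<Longrightarrow> cd f = dm g \<Longrightarrow> cd g = dm h \<Longrightarrow>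
   (f \<cdot> g) \<cdot> h = f \<cdot> (g \<cdot> h)"
  using catC unfolding category_def by auto

lemma L_dom[simp]: "ArL f \<Longrightarrow> ObL (dL f)" and L_cod[simp]: "ArL f \<Longrightarrow> ObL (cL f)"
  using catL unfolding category_def by auto
lemma L_id[simp]: "ObL X \<Longrightarrow> ArL (idL X)" "ObL X \<Longrightarrow> dL (idL X) = X" "ObL X \<Longrightarrow> cL (idL X) = X"
  using catL unfolding category_def hom_def by auto
lemma L_comp[simp]: "ArL f \<Longrightarrow> ArL g \<Longrightarrow> cL f = dL g \<Longrightarrow> ArL (f \<bullet> g)"
  "ArL f \<Longrightarrow> ArL g \<Longrightarrow> cL f = dL g \<Longrightarrow> dL (f \<bullet> g) = dL f"
  "ArL f \<Longrightarrow> ArL g \<Longrightarrow> cL f = dL g \<Longrightarrow> cL (f \<bullet> g) = cL g"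
  using catL unfolding category_def hom_def by auto
lemma L_idl[simp]: "ArL f \<Longrightarrow> X = dL f \<Longrightarrow> idL X \<bullet> f = f"
  and L_idr[simp]: "ArL f \<Longrightarrow> X = cL f \<Longrightarrow> f \<bullet> idL X = f"
  using catL unfolding category_def by auto
lemma L_assoc[simp]: "ArL f \<Longrightarrow> ArL g \<Longrightarrow> ArL h \<Longrightarrow> cL f = dL g \<Longrightarrow> cL g = dL h \<Longrightarrow>
   (f \<bullet> g) \<bullet> h = f \<bullet> (g \<bullet> h)"
  using catL unfolding category_def by auto

lemma L_unit[simp]: "ObL (mUnt L)" using smc unfolding strict_smc_def by auto
lemma L_tns[simp]: "ObL a \<Longrightarrow> ObL b \<Longrightarrow> ObL (a \<otimes> b)" using smc unfolding strict_smc_def by auto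
lemma L_tnsA[simp]: "ArL f \<Longrightarrow> ArL g \<Longrightarrow> ArL (f \<oplus> g)"
   "ArL f \<Longrightarrow> ArL g \<Longrightarrow> dL (f \<oplus> g) = dL f \<otimes> dL g"
   "ArL f \<Longrightarrow> ArL g \<Longrightarrow> cL (f \<oplus> g) = cL f \<otimes> cL g"
  using smc unfolding strict_smc_def hom_def by auto
lemma L_tns_assoc[simp]: "ObL a \<Longrightarrow> ObL b \<Longrightarrow> ObL c \<Longrightarrow> (a \<otimes> b) \<otimes> c = a \<otimes> (b \<otimes> c)"
  using smc unfolding strict_smc_def by auto
lemma L_tns_unit[simp]: "ObL a \<Longrightarrow> mUnt L \<otimes> a = a" "ObL a \<Longrightarrow> a \<otimes> mUnt L = a"
  using smc unfolding strict_smc_def by auto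
lemma L_tnsA_assoc[simp]: "ArL f \<Longrightarrow> ArL g \<Longrightarrow> ArL h \<Longrightarrow> (f \<oplus> g) \<oplus> h = f \<oplus> (g \<oplus> h)"
  using smc unfolding strict_smc_def by auto
lemma L_tnsA_id: "ObL a \<Longrightarrow> ObL b \<Longrightarrow> idL a \<oplus> idL b = idL (a \<otimes> b)"
  using smc unfolding strict_smc_def by auto
lemma L_interchange: "ArL f \<Longrightarrow> ArL f' \<Longrightarrow> ArL g \<Longrightarrow> ArL g' \<Longrightarrow> cL f = dL f' \<Longrightarrow> cL g = dL g' \<Longrightarrow>
   (f \<bullet> f') \<oplus> (g \<bullet> g') = (f \<oplus> g) \<bullet> (f' \<oplus> g')"
  using smc unfolding strict_smc_def by auto
lemma L_sym[simp]: "ObL a \<Longrightarrow> ObL b \<Longrightarrow> ArL (mSym L a b)"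
  "ObL a \<Longrightarrow> ObL b \<Longrightarrow> dL (mSym L a b) = a \<otimes> b"
  "ObL a \<Longrightarrow> ObL b \<Longrightarrow> cL (mSym L a b) = b \<otimes> a"
  using smc unfolding strict_smc_def hom_def by auto

end

context lnl begin

lemma C_trm[simp]: "Ob trm" using cart unfolding cartesian_category_def by auto
lemma C_bang[simp]: "Ob X \<Longrightarrow> Ar (bang X)" "Ob X \<Longrightarrow> dm (bang X) = X" "Ob X \<Longrightarrow> cd (bang X) = trm"
  using cart unfolding cartesian_category_def hom_def by auto
lemma C_bang_uniq: "Ar f \<Longrightarrow> cd f = trm \<Longrightarrow> f = bang (dm f)"
  using cart unfolding cartesian_category_def hom_def by auto
lemma C_prd[simp]: "Ob X \<Longrightarrow> Ob Y \<Longrightarrow> Ob (prd X Y)"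
  using cart unfolding cartesian_category_def hom_def by auto
lemma C_pr1[simp]: "Ob X \<Longrightarrow> Ob Y \<Longrightarrow> Ar (pr1 X Y)" "Ob X \<Longrightarrow> Ob Y \<Longrightarrow> dm (pr1 X Y) = prd X Y"
   "Ob X \<Longrightarrow> Ob Y \<Longrightarrow> cd (pr1 X Y) = X"
  using cart unfolding cartesian_category_def hom_def by auto
lemma C_pr2[simp]: "Ob X \<Longrightarrow> Ob Y \<Longrightarrow> Ar (pr2 X Y)" "Ob X \<Longrightarrow> Ob Y \<Longrightarrow> dm (pr2 X Y) = prd X Y"
   "Ob X \<Longrightarrow> Ob Y \<Longrightarrow> cd (pr2 X Y) = Y"
  using cart unfolding cartesian_category_def hom_def by auto
lemma C_pair[simp]: "Ar f \<Longrightarrow> Ar g \<Longrightarrow> dm f = dm g \<Longrightarrow> Ar (pair f g)"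
   "Ar f \<Longrightarrow> Ar g \<Longrightarrow> dm f = dm g \<Longrightarrow> dm (pair f g) = dm f"
   "Ar f \<Longrightarrow> Ar g \<Longrightarrow> dm f = dm g \<Longrightarrow> cd (pair f g) = prd (cd f) (cd g)"
  using cart unfolding cartesian_category_def hom_def by auto
lemma C_pair_pr1[simp]: "Ar f \<Longrightarrow> Ar g \<Longrightarrow> dm f = dm g \<Longrightarrow> X = cd f \<Longrightarrow> Y = cd g \<Longrightarrow> pair f g \<cdot> pr1 X Y = f"
  and C_pair_pr2[simp]: "Ar f \<Longrightarrow> Ar g \<Longrightarrow> dm f = dm g \<Longrightarrow> X = cd f \<Longrightarrow> Y = cd g \<Longrightarrow> pair f g \<cdot> pr2 X Y = g"
  using cart unfolding cartesian_category_def hom_def by auto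
lemma C_pair_uniq: "Ob X \<Longrightarrow> Ob Y \<Longrightarrow> Ar h \<Longrightarrow> cd h = prd X Y \<Longrightarrow> h = pair (h \<cdot> pr1 X Y) (h \<cdot> pr2 X Y)"
  using cart unfolding cartesian_category_def by auto
lemma C_prd_assoc[simp]: "Ob X \<Longrightarrow> Ob Y \<Longrightarrow> Ob Z \<Longrightarrow> prd (prd X Y) Z = prd X (prd Y Z)"
  using cart unfolding cartesian_category_def by auto
lemma C_prd_assoc_pair: "Ob X \<Longrightarrow> Ob Y \<Longrightarrow> Ob Z \<Longrightarrow>
    pair (pr1 (prd X Y) Z \<cdot> pr1 X Y) (pair (pr1 (prd X Y) Z \<cdot> pr2 X Y) (pr2 (prd X Y) Z))
      = idC (prd (prd X Y) Z)"
  using cart unfolding cartesian_category_def by auto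
lemma C_prd_unit[simp]: "Ob X \<Longrightarrow> prd trm X = X" "Ob X \<Longrightarrow> prd X trm = X"
  "Ob X \<Longrightarrow> pr2 trm X = idC X" "Ob X \<Longrightarrow> pr1 X trm = idC X"
  using cart unfolding cartesian_category_def by auto

lemma C_pair_pr1'[simp]: "Ar f \<Longrightarrow> Ar g \<Longrightarrow> dm f = dm g \<Longrightarrow> X = cd f \<Longrightarrow> Y = cd g \<Longrightarrow> Ar k \<Longrightarrow> dm k = X \<Longrightarrow>
   pair f g \<cdot> (pr1 X Y \<cdot> k) = f \<cdot> k"
  and C_pair_pr2'[simp]: "Ar f \<Longrightarrow> Ar g \<Longrightarrow> dm f = dm g \<Longrightarrow> X = cd f \<Longrightarrow> Y = cd g \<Longrightarrow> Ar k \<Longrightarrow> dm k = Y \<Longrightarrow>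
   pair f g \<cdot> (pr2 X Y \<cdot> k) = g \<cdot> k"
  by (simp_all flip: C_assoc)

lemma C_bang_comp[simp]: "Ar f \<Longrightarrow> cd f = X \<Longrightarrow> f \<cdot> bang X = bang (dm f)"
proof -
  assume a: "Ar f" "cd f = X"
  have "Ob X" using a C_cod by blast
  have "f \<cdot> bang X = bang (dm (f \<cdot> bang X))" by (rule C_bang_uniq) (use a in auto)
  then show ?thesis using a \<open>Ob X\<close> by simp
qed
lemma C_bang_comp'[simp]: "Ar f \<Longrightarrow> cd f = X \<Longrightarrow> Ar k \<Longrightarrow> dm k = trm \<Longrightarrow> f \<cdot> (bang X \<cdot> k) = bang (dm f) \<cdot> k"
  by (metis C_assoc C_bang C_bang_comp C_cod)

lemma C_pair_ext: "Ar h \<Longrightarrow> Ar h' \<Longrightarrow> Ob X \<Longrightarrow> Ob Y \<Longrightarrow> cd h = prd X Y \<Longrightarrow> cd h' = prd X Y \<Longrightarrow>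
   h \<cdot> pr1 X Y = h' \<cdot> pr1 X Y \<Longrightarrow> h \<cdot> pr2 X Y = h' \<cdot> pr2 X Y \<Longrightarrow> h = h'"
  by (metis C_pair_uniq)

lemma C_comp_pair[simp]: "Ar h \<Longrightarrow> Ar f \<Longrightarrow> Ar g \<Longrightarrow> dm f = dm g \<Longrightarrow> cd h = dm f \<Longrightarrow>
   h \<cdot> pair f g = pair (h \<cdot> f) (h \<cdot> g)"
  apply (rule C_pair_ext[where X="cd f" and Y="cd g"])
  by simp_all

lemma C_pair_proj[simp]: "Ob X \<Longrightarrow> Ob Y \<Longrightarrow> pair (pr1 X Y) (pr2 X Y) = idC (prd X Y)"
  by (rule C_pair_ext[where X=X and Y=Y]) auto

lemma C_pr1_assoc: "Ob X \<Longrightarrow> Ob Y \<Longrightarrow> Ob Z \<Longrightarrow> pr1 X (prd Y Z) = pr1 (prd X Y) Z \<cdot> pr1 X Y"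
proof -
  assume a: "Ob X" "Ob Y" "Ob Z"
  have "pr1 X (prd Y Z) = idC (prd (prd X Y) Z) \<cdot> pr1 X (prd Y Z)" using a by simp
  also have "\<dots> = pr1 (prd X Y) Z \<cdot> pr1 X Y" 
    by (subst C_prd_assoc_pair[symmetric]) (use a in simp_all)
  finally show ?thesis .
qed
lemma C_pr2_assoc: "Ob X \<Longrightarrow> Ob Y \<Longrightarrow> Ob Z \<Longrightarrow> pr2 X (prd Y Z) = pair (pr1 (prd X Y) Z \<cdot> pr2 X Y) (pr2 (prd X Y) Z)"
proof -
  assume a: "Ob X" "Ob Y" "Ob Z"
  have "pr2 X (prd Y Z) = idC (prd (prd X Y) Z) \<cdot> pr2 X (prd Y Z)" using a by simp
  also have "\<dots> = pair (pr1 (prd X Y) Z \<cdot> pr2 X Y) (pr2 (prd X Y) Z)" 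
    by (subst C_prd_assoc_pair[symmetric]) (use a in simp_all)
  finally show ?thesis .
qed

lemma C_pr1_left[simp]: "Ob X \<Longrightarrow> Ob Y \<Longrightarrow> Ob Z \<Longrightarrow>
   pr1 (prd X Y) Z = pair (pr1 X (prd Y Z)) (pr2 X (prd Y Z) \<cdot> pr1 Y Z)"
proof -
  assume a: "Ob X" "Ob Y" "Ob Z"
  have "pair (pr1 X (prd Y Z)) (pr2 X (prd Y Z) \<cdot> pr1 Y Z) = 
     pair (pr1 (prd X Y) Z \<cdot> pr1 X Y) (pr1 (prd X Y) Z \<cdot> pr2 X Y)"
    unfolding C_pr1_assoc[OF a] C_pr2_assoc[OF a] using a by (simp del: C_prd_assoc)
  also have "\<dots> = pr1 (prd X Y) Z" using a by (intro C_pair_uniq[symmetric]) (simp_all del: C_prd_assoc)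
  finally show ?thesis by simp
qed
lemma C_pr2_left[simp]: "Ob X \<Longrightarrow> Ob Y \<Longrightarrow> Ob Z \<Longrightarrow>
   pr2 (prd X Y) Z = pr2 X (prd Y Z) \<cdot> pr2 Y Z"
proof -
  assume a: "Ob X" "Ob Y" "Ob Z"
  show ?thesis
    unfolding C_pr2_assoc[OF a] using a by simp
qed

lemma C_pair_assoc[simp]: "Ar a \<Longrightarrow> Ar b \<Longrightarrow> Ar c \<Longrightarrow> dm a = dm b \<Longrightarrow> dm b = dm c \<Longrightarrow>
   pair (pair a b) c = pair a (pair b c)"
  apply (rule C_pair_ext[where X="cd a" and Y="prd (cd b) (cd c)"])
  apply (simp_all del: C_pr1_left C_pr2_left)
  apply (subst C_pr1_assoc, simp_all del: C_pr1_left C_pr2_left)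
  apply (subst C_pr2_assoc, simp_all del: C_pr1_left C_pr2_left)
  done

lemma prod_arr_eq[simp]: "prod_arr C f g = pair (pr1 (dm f) (dm g) \<cdot> f) (pr2 (dm f) (dm g) \<cdot> g)"
  by (simp add: prod_arr_def)
lemma diag_eq[simp]: "diag C X = pair (idC X) (idC X)" by (simp add: diag_def)
lemma cswap_eq[simp]: "cswap C X Y = pair (pr2 X Y) (pr1 X Y)" by (simp add: cswap_def)

lemma S_comp_fib: "Ar f \<Longrightarrow> Ar u \<Longrightarrow> Ob J \<Longrightarrow> dm u = prd (dm f) J \<Longrightarrow>
  prod_arr C (diag C (dm f)) (idC J) \<cdot> prod_arr C f u = pair (pr1 (dm f) J \<cdot> f) u"
  by simp

end

context lnl begin

lemma C_pr1_trm[simp]: "Ob X \<Longrightarrow> pr1 trm X = bang X"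
  using C_bang_uniq[of "pr1 trm X"] by simp
lemma C_pr2_trm[simp]: "Ob X \<Longrightarrow> pr2 X trm = bang X"
  using C_bang_uniq[of "pr2 X trm"] by simp

lemma C_comp_pair'[simp]: "Ar h \<Longrightarrow> Ar f \<Longrightarrow> Ar g \<Longrightarrow> dm f = dm g \<Longrightarrow> cd h = dm f \<Longrightarrow>
   Ar k \<Longrightarrow> dm k = prd (cd f) (cd g) \<Longrightarrow>
   h \<cdot> (pair f g \<cdot> k) = pair (h \<cdot> f) (h \<cdot> g) \<cdot> k"
  by (simp flip: C_assoc)

lemma U_ob[simp]: "ObL a \<Longrightarrow> Ob (Uo a)"
  and U_ar[simp]: "ArL f \<Longrightarrow> Ar (Um f)" "ArL f \<Longrightarrow> dm (Um f) = Uo (dL f)" "ArL f \<Longrightarrow> cd (Um f) = Uo (cL f)"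
  and U_id[simp]: "ObL a \<Longrightarrow> Um (idL a) = idC (Uo a)"
  and U_comp[simp]: "ArL f \<Longrightarrow> ArL g \<Longrightarrow> cL f = dL g \<Longrightarrow> Um (f \<bullet> g) = Um f \<cdot> Um g"
  using UF unfolding is_functor_def hom_def by auto
lemma F_ob[simp]: "Ob a \<Longrightarrow> ObL (Fo a)"
  and F_ar[simp]: "Ar f \<Longrightarrow> ArL (Fm f)" "Ar f \<Longrightarrow> dL (Fm f) = Fo (dm f)" "Ar f \<Longrightarrow> cL (Fm f) = Fo (cd f)"
  and F_id[simp]: "Ob a \<Longrightarrow> Fm (idC a) = idL (Fo a)"
  and F_comp[simp]: "Ar f \<Longrightarrow> Ar g \<Longrightarrow> cd f = dm g \<Longrightarrow> Fm (f \<cdot> g) = Fm f \<bullet> Fm g"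
  using FF unfolding is_functor_def hom_def by auto

lemma eta_ar[simp]: "Ob X \<Longrightarrow> Ar (\<eta> X)" "Ob X \<Longrightarrow> dm (\<eta> X) = X" "Ob X \<Longrightarrow> cd (\<eta> X) = Uo (Fo X)"
  using etaN unfolding nat_trans_def hom_def by auto
lemma eta_nat: "Ar f \<Longrightarrow> f \<cdot> \<eta> (cd f) = \<eta> (dm f) \<cdot> Um (Fm f)"
  using etaN unfolding nat_trans_def by auto

lemma m_ar[simp]: "Ob X \<Longrightarrow> Ob Y \<Longrightarrow> ArL (m X Y)" "Ob X \<Longrightarrow> Ob Y \<Longrightarrow> dL (m X Y) = Fo X \<otimes> Fo Y"
   "Ob X \<Longrightarrow> Ob Y \<Longrightarrow> cL (m X Y) = Fo (prd X Y)"
  using Fmon unfolding sym_lax_monoidal_def hom_def cart_smc_def by auto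
lemma m1_ar[simp]: "ArL m1" "dL m1 = mUnt L" "cL m1 = Fo trm"
  using Fmon unfolding sym_lax_monoidal_def hom_def cart_smc_def by auto

lemma inv_ok: "is_iso L f \<Longrightarrow> inverse_arr L f (inv_arr L f)"
  unfolding is_iso_def inv_arr_def by (rule someI_ex)

lemma minv[simp]: "Ob X \<Longrightarrow> Ob Y \<Longrightarrow> ArL (inv_arr L (m X Y))"
   "Ob X \<Longrightarrow> Ob Y \<Longrightarrow> dL (inv_arr L (m X Y)) = Fo (prd X Y)"
   "Ob X \<Longrightarrow> Ob Y \<Longrightarrow> cL (inv_arr L (m X Y)) = Fo X \<otimes> Fo Y"
  and minv_id: "Ob X \<Longrightarrow> Ob Y \<Longrightarrow> m X Y \<bullet> inv_arr L (m X Y) = idL (Fo X \<otimes> Fo Y)"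
  using inv_ok[of "m X Y"] miso unfolding inverse_arr_def by auto
lemma m1inv[simp]: "ArL (inv_arr L m1)" "dL (inv_arr L m1) = Fo trm" "cL (inv_arr L m1) = mUnt L"
  and m1inv_id: "m1 \<bullet> inv_arr L m1 = idL (mUnt L)"
  using inv_ok[of m1] m1iso unfolding inverse_arr_def by auto

lemma copy_ar[simp]: "Ob X \<Longrightarrow> ArL (copy C L Fm m X)" "Ob X \<Longrightarrow> dL (copy C L Fm m X) = Fo X"
   "Ob X \<Longrightarrow> cL (copy C L Fm m X) = Fo X \<otimes> Fo X"
  unfolding copy_def by simp_all
lemma weak_ar[simp]: "Ob X \<Longrightarrow> ArL (weak C L Fm m1 X)" "Ob X \<Longrightarrow> dL (weak C L Fm m1 X) = Fo X"
   "Ob X \<Longrightarrow> cL (weak C L Fm m1 X) = mUnt L"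
  unfolding weak_def by simp_all

lemma n_ar[simp]: "ObL a \<Longrightarrow> ObL b \<Longrightarrow> Ar (n a b)" "ObL a \<Longrightarrow> ObL b \<Longrightarrow> dm (n a b) = prd (Uo a) (Uo b)"
   "ObL a \<Longrightarrow> ObL b \<Longrightarrow> cd (n a b) = Uo (a \<otimes> b)"
  using Umon unfolding sym_lax_monoidal_def hom_def cart_smc_def by auto
lemma n1_ar[simp]: "Ar n1" "dm n1 = trm" "cd n1 = Uo (mUnt L)"
  using Umon unfolding sym_lax_monoidal_def hom_def cart_smc_def by auto
lemma n_nat: "ArL f \<Longrightarrow> ArL g \<Longrightarrow>
   prod_arr C (Um f) (Um g) \<cdot> n (cL f) (cL g) = n (dL f) (dL g) \<cdot> Um (f \<oplus> g)"
  using Umon unfolding sym_lax_monoidal_def cart_smc_def by auto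
lemma n_assoc: "ObL a \<Longrightarrow> ObL b \<Longrightarrow> ObL c \<Longrightarrow>
   prod_arr C (n a b) (idC (Uo c)) \<cdot> n (a \<otimes> b) c = prod_arr C (idC (Uo a)) (n b c) \<cdot> n a (b \<otimes> c)"
  using Umon unfolding sym_lax_monoidal_def cart_smc_def by simp
lemma n_lunit: "ObL a \<Longrightarrow> prod_arr C n1 (idC (Uo a)) \<cdot> n (mUnt L) a = idC (Uo a)"
  using Umon unfolding sym_lax_monoidal_def cart_smc_def by simp
lemma n_runit: "ObL a \<Longrightarrow> prod_arr C (idC (Uo a)) n1 \<cdot> n a (mUnt L) = idC (Uo a)"
  using Umon unfolding sym_lax_monoidal_def cart_smc_def by simp
lemma n_sym: "ObL a \<Longrightarrow> ObL b \<Longrightarrow> cswap C (Uo a) (Uo b) \<cdot> n b a = n a b \<cdot> Um (mSym L a b)"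
  using Umon unfolding sym_lax_monoidal_def cart_smc_def by simp

end

context lnl begin

lemma N1: "ArL f \<Longrightarrow> ArL g \<Longrightarrow> Ar e1 \<Longrightarrow> Ar e2 \<Longrightarrow> dm e1 = dm e2 \<Longrightarrow>
   cd e1 = Uo (dL f) \<Longrightarrow> cd e2 = Uo (dL g) \<Longrightarrow>
   pair (e1 \<cdot> Um f) (e2 \<cdot> Um g) \<cdot> n (cL f) (cL g) = pair e1 e2 \<cdot> n (dL f) (dL g) \<cdot> Um (f \<oplus> g)"
proof -
  assume a: "ArL f" "ArL g" "Ar e1" "Ar e2" "dm e1 = dm e2" "cd e1 = Uo (dL f)" "cd e2 = Uo (dL g)"
  have "pair e1 e2 \<cdot> (prod_arr C (Um f) (Um g) \<cdot> n (cL f) (cL g)) = pair e1 e2 \<cdot> (n (dL f) (dL g) \<cdot> Um (f \<oplus> g))"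
    using n_nat[OF a(1,2)] by simp
  then show ?thesis using a by simp
qed

lemma N2: "Ar e1 \<Longrightarrow> Ar e2 \<Longrightarrow> Ar e3 \<Longrightarrow> dm e1 = dm e2 \<Longrightarrow> dm e2 = dm e3 \<Longrightarrow>
   ObL P \<Longrightarrow> ObL Q \<Longrightarrow> ObL R \<Longrightarrow> cd e1 = Uo P \<Longrightarrow> cd e2 = Uo Q \<Longrightarrow> cd e3 = Uo R \<Longrightarrow>
   pair (pair e1 e2 \<cdot> n P Q) e3 \<cdot> n (P \<otimes> Q) R = pair e1 (pair e2 e3 \<cdot> n Q R) \<cdot> n P (Q \<otimes> R)"
proof -
  assume a: "Ar e1" "Ar e2" "Ar e3" "dm e1 = dm e2" "dm e2 = dm e3"
   "ObL P" "ObL Q" "ObL R" "cd e1 = Uo P" "cd e2 = Uo Q" "cd e3 = Uo R"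
  have "pair e1 (pair e2 e3) \<cdot> (prod_arr C (n P Q) (idC (Uo R)) \<cdot> n (P \<otimes> Q) R)
     = pair e1 (pair e2 e3) \<cdot> (prod_arr C (idC (Uo P)) (n Q R) \<cdot> n P (Q \<otimes> R))"
    using n_assoc[OF a(6,7,8)] by simp
  then show ?thesis using a by simp
qed

lemma N3: "Ar e1 \<Longrightarrow> Ar e2 \<Longrightarrow> dm e1 = dm e2 \<Longrightarrow> ObL P \<Longrightarrow> ObL Q \<Longrightarrow> cd e1 = Uo P \<Longrightarrow> cd e2 = Uo Q \<Longrightarrow>
   pair e2 e1 \<cdot> n Q P = pair e1 e2 \<cdot> n P Q \<cdot> Um (mSym L P Q)"
proof -
  assume a: "Ar e1" "Ar e2" "dm e1 = dm e2" "ObL P" "ObL Q" "cd e1 = Uo P" "cd e2 = Uo Q"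
  have "pair e1 e2 \<cdot> (cswap C (Uo P) (Uo Q) \<cdot> n Q P) = pair e1 e2 \<cdot> (n P Q \<cdot> Um (mSym L P Q))"
    using n_sym[OF a(4,5)] by simp
  then show ?thesis using a by simp
qed

lemma N4: "Ar e \<Longrightarrow> ObL P \<Longrightarrow> cd e = Uo P \<Longrightarrow> pair (bang (dm e) \<cdot> n1) e \<cdot> n (mUnt L) P = e"
proof -
  assume a: "Ar e" "ObL P" "cd e = Uo P"
  have "e \<cdot> (prod_arr C n1 (idC (Uo P)) \<cdot> n (mUnt L) P) = e \<cdot> idC (Uo P)"
    using n_lunit[OF a(2)] by simp
  then show ?thesis using a by simp
qed

lemma N4r: "Ar e \<Longrightarrow> ObL P \<Longrightarrow> cd e = Uo P \<Longrightarrow> pair e (bang (dm e) \<cdot> n1) \<cdot> n P (mUnt L) = e"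
proof -
  assume a: "Ar e" "ObL P" "cd e = Uo P"
  have "e \<cdot> (prod_arr C (idC (Uo P)) n1 \<cdot> n P (mUnt L)) = e \<cdot> idC (Uo P)"
    using n_runit[OF a(2)] by simp
  then show ?thesis using a by simp
qed

lemma E1: "Ob X \<Longrightarrow> \<eta> X \<cdot> Um (copy C L Fm m X) = pair (\<eta> X) (\<eta> X) \<cdot> n (Fo X) (Fo X)"
proof -
  assume X: "Ob X"
  have "\<eta> X \<cdot> Um (copy C L Fm m X) = (\<eta> X \<cdot> Um (Fm (diag C X))) \<cdot> Um (inv_arr L (m X X))"
    using X unfolding copy_def by simp
  also have "\<eta> X \<cdot> Um (Fm (diag C X)) = diag C X \<cdot> \<eta> (prd X X)"
    using eta_nat[of "diag C X"] X by simp
  also have "\<eta> (prd X X) = prod_arr C (\<eta> X) (\<eta> X) \<cdot> (n (Fo X) (Fo X) \<cdot> Um (m X X))"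
    using etam X by simp
  finally have "\<eta> X \<cdot> Um (copy C L Fm m X) = 
     (diag C X \<cdot> prod_arr C (\<eta> X) (\<eta> X) \<cdot> n (Fo X) (Fo X)) \<cdot> (Um (m X X) \<cdot> Um (inv_arr L (m X X)))"
    using X by simp
  also have "Um (m X X) \<cdot> Um (inv_arr L (m X X)) = idC (Uo (Fo X \<otimes> Fo X))"
    using X by (simp flip: U_comp add: minv_id)
  finally show ?thesis using X by simp
qed

lemma E2: "Ob X \<Longrightarrow> \<eta> X \<cdot> Um (weak C L Fm m1 X) = bang X \<cdot> n1"
proof -
  assume X: "Ob X"
  have "\<eta> X \<cdot> Um (weak C L Fm m1 X) = (\<eta> X \<cdot> Um (Fm (bang X))) \<cdot> Um (inv_arr L m1)"
    using X unfolding weak_def by simp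
  also have "\<eta> X \<cdot> Um (Fm (bang X)) = bang X \<cdot> \<eta> trm"
    using eta_nat[of "bang X"] X by simp
  also have "\<eta> trm = n1 \<cdot> Um m1"
    using etam1 by simp
  finally have "\<eta> X \<cdot> Um (weak C L Fm m1 X) = (bang X \<cdot> n1) \<cdot> (Um m1 \<cdot> Um (inv_arr L m1))"
    using X by simp
  also have "Um m1 \<cdot> Um (inv_arr L m1) = idC (Uo (mUnt L))"
    by (simp flip: U_comp add: m1inv_id)
  finally show ?thesis using X by simp
qed

end

context lnl begin

lemma N1': "ArL f \<Longrightarrow> ArL g \<Longrightarrow> Ar e1 \<Longrightarrow> Ar e2 \<Longrightarrow> dm e1 = dm e2 \<Longrightarrow>
   cd e1 = Uo A \<Longrightarrow> cd e2 = Uo B \<Longrightarrow> dL f = A \<Longrightarrow> dL g = B \<Longrightarrow> cL f = A' \<Longrightarrow> cL g = B' \<Longrightarrow>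
   pair e1 e2 \<cdot> n A B \<cdot> Um (f \<oplus> g) = pair (e1 \<cdot> Um f) (e2 \<cdot> Um g) \<cdot> n A' B'"
  using N1[of f g e1 e2] by simp

lemma interchange:
  assumes a: "Ar e1" "Ar e2" "Ar e3" "Ar e4" "dm e2 = dm e1" "dm e3 = dm e1" "dm e4 = dm e1"
    "ObL P" "ObL Q" "ObL R" "ObL S" "cd e1 = Uo P" "cd e2 = Uo Q" "cd e3 = Uo R" "cd e4 = Uo S"
  shows "pair (pair e1 e2 \<cdot> n P Q) (pair e3 e4 \<cdot> n R S) \<cdot> n (P \<otimes> Q) (R \<otimes> S) \<cdot> Um ((idL P \<oplus> mSym L Q R) \<oplus> idL S)
       = pair (pair e1 e3 \<cdot> n P R) (pair e2 e4 \<cdot> n Q S) \<cdot> n (P \<otimes> R) (Q \<otimes> S)"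
proof -
  have l1: "pair (pair e1 e2 \<cdot> n P Q) (pair e3 e4 \<cdot> n R S) \<cdot> n (P \<otimes> Q) (R \<otimes> S)
     = pair e1 (pair e2 (pair e3 e4 \<cdot> n R S) \<cdot> n Q (R \<otimes> S)) \<cdot> n P (Q \<otimes> R \<otimes> S)"
    by (rule N2) (use a in simp_all)
  have l2: "pair e2 (pair e3 e4 \<cdot> n R S) \<cdot> n Q (R \<otimes> S) = pair (pair e2 e3 \<cdot> n Q R) e4 \<cdot> n (Q \<otimes> R) S"
    by (rule N2[symmetric]) (use a in simp_all)
  have r1: "pair (pair e1 e3 \<cdot> n P R) (pair e2 e4 \<cdot> n Q S) \<cdot> n (P \<otimes> R) (Q \<otimes> S)
     = pair e1 (pair e3 (pair e2 e4 \<cdot> n Q S) \<cdot> n R (Q \<otimes> S)) \<cdot> n P (R \<otimes> Q \<otimes> S)"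
    by (rule N2) (use a in simp_all)
  have r2: "pair e3 (pair e2 e4 \<cdot> n Q S) \<cdot> n R (Q \<otimes> S) = pair (pair e3 e2 \<cdot> n R Q) e4 \<cdot> n (R \<otimes> Q) S"
    by (rule N2[symmetric]) (use a in simp_all)
  have s: "pair e2 e3 \<cdot> n Q R \<cdot> Um (mSym L Q R) = pair e3 e2 \<cdot> n R Q"
    by (rule N3[symmetric]) (use a in simp_all)
  have t1: "pair (pair e2 e3 \<cdot> n Q R) e4 \<cdot> n (Q \<otimes> R) S \<cdot> Um (mSym L Q R \<oplus> idL S)
      = pair ((pair e2 e3 \<cdot> n Q R) \<cdot> Um (mSym L Q R)) (e4 \<cdot> Um (idL S)) \<cdot> n (R \<otimes> Q) S"
    by (rule N1') (use a in simp_all)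
  have t2: "pair e1 (pair (pair e2 e3 \<cdot> n Q R) e4 \<cdot> n (Q \<otimes> R) S) \<cdot> n P (Q \<otimes> R \<otimes> S) \<cdot> Um (idL P \<oplus> (mSym L Q R \<oplus> idL S))
      = pair (e1 \<cdot> Um (idL P)) ((pair (pair e2 e3 \<cdot> n Q R) e4 \<cdot> n (Q \<otimes> R) S) \<cdot> Um (mSym L Q R \<oplus> idL S)) \<cdot> n P (R \<otimes> Q \<otimes> S)"
    by (rule N1') (use a in simp_all)
  have u: "(idL P \<oplus> mSym L Q R) \<oplus> idL S = idL P \<oplus> (mSym L Q R \<oplus> idL S)"
    using a by simp
  have "pair (pair e1 e2 \<cdot> n P Q) (pair e3 e4 \<cdot> n R S) \<cdot> n (P \<otimes> Q) (R \<otimes> S) \<cdot> Um ((idL P \<oplus> mSym L Q R) \<oplus> idL S)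
     = pair e1 (pair (pair e2 e3 \<cdot> n Q R) e4 \<cdot> n (Q \<otimes> R) S) \<cdot> n P (Q \<otimes> R \<otimes> S) \<cdot> Um (idL P \<oplus> (mSym L Q R \<oplus> idL S))"
    unfolding u
    apply (subst C_assoc[symmetric])
    apply (use a in simp_all)[5]
    apply (subst l1, subst l2)
    apply (subst C_assoc)
    apply (use a in simp_all)
    done
  also have "\<dots> = pair e1 (pair (pair e3 e2 \<cdot> n R Q) (e4 \<cdot> Um (idL S)) \<cdot> n (R \<otimes> Q) S) \<cdot> n P (R \<otimes> Q \<otimes> S)"
    using a s t1 t2 by simp
  also have "\<dots> = pair (pair e1 e3 \<cdot> n P R) (pair e2 e4 \<cdot> n Q S) \<cdot> n (P \<otimes> R) (Q \<otimes> S)"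
    unfolding r1 r2 using a by simp
  finally show ?thesis .
qed

end

context lnl begin

lemma tailC: "a \<cdot> b = c \<cdot> d \<Longrightarrow> Ar a \<Longrightarrow> Ar b \<Longrightarrow> Ar c \<Longrightarrow> Ar d \<Longrightarrow> Ar k \<Longrightarrow>
  cd a = dm b \<Longrightarrow> cd c = dm d \<Longrightarrow> cd b = dm k \<Longrightarrow> cd d = dm k \<Longrightarrow> a \<cdot> b \<cdot> k = c \<cdot> d \<cdot> k"
  by (metis C_assoc)

lemma IDL:
  assumes X: "Ob X" and A: "ObL A"
  shows "pair (pr1 X (Uo A) \<cdot> \<eta> X) (pr2 X (Uo A)) \<cdot> n (Fo X) A \<cdot> Um (weak C L Fm m1 X \<oplus> idL A) = pr2 X (Uo A)"
proof -
  have "pair (pr1 X (Uo A) \<cdot> \<eta> X) (pr2 X (Uo A)) \<cdot> n (Fo X) A \<cdot> Um (weak C L Fm m1 X \<oplus> idL A)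
    = pair ((pr1 X (Uo A) \<cdot> \<eta> X) \<cdot> Um (weak C L Fm m1 X)) (pr2 X (Uo A) \<cdot> Um (idL A)) \<cdot> n (mUnt L) A"
    by (rule N1') (use X A in simp_all)
  also have "\<dots> = pair (bang (prd X (Uo A)) \<cdot> n1) (pr2 X (Uo A)) \<cdot> n (mUnt L) A"
    using X A E2[OF X] by simp
  also have "\<dots> = pr2 X (Uo A)"
    using N4[of "pr2 X (Uo A)" A] X A by simp
  finally show ?thesis .
qed

lemma COMP:
  assumes X: "Ob X" and Y: "Ob Y" and A: "ObL A" and B: "ObL B" and f: "Ar f" "dm f = X" "cd f = Y"
    and u: "ArL u" "dL u = Fo X \<otimes> A" "cL u = B"
  shows "pair (pr1 X (Uo A) \<cdot> f \<cdot> \<eta> Y) (pair (pr1 X (Uo A) \<cdot> \<eta> X) (pr2 X (Uo A)) \<cdot> n (Fo X) A \<cdot> Um u) \<cdot> n (Fo Y) B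
  = pair (pr1 X (Uo A) \<cdot> \<eta> X) (pr2 X (Uo A)) \<cdot> n (Fo X) A \<cdot> Um (copy C L Fm m X \<oplus> idL A) \<cdot> Um (Fm f \<oplus> u)"
proof -
  define p where "p = pr1 X (Uo A)"
  define q where "q = pr2 X (Uo A)"
  define e where "e = p \<cdot> \<eta> X"
  have ty: "Ar p" "dm p = prd X (Uo A)" "cd p = X" "Ar q" "dm q = prd X (Uo A)" "cd q = Uo A"
     "Ar e" "dm e = prd X (Uo A)" "cd e = Uo (Fo X)"
    unfolding e_def p_def q_def using X A by simp_all
  have s1: "p \<cdot> f \<cdot> \<eta> Y = e \<cdot> Um (Fm f)"
    unfolding e_def using eta_nat[of f] f X Y ty(1-3) by simp
  have s2: "pair (e \<cdot> Um (Fm f)) ((pair e q \<cdot> n (Fo X) A) \<cdot> Um u) \<cdot> n (Fo Y) B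
     = pair e (pair e q \<cdot> n (Fo X) A) \<cdot> n (Fo X) (Fo X \<otimes> A) \<cdot> Um (Fm f \<oplus> u)"
    by (rule N1'[symmetric]) (use X Y A B f u ty in simp_all)
  have s3: "pair (pair e e \<cdot> n (Fo X) (Fo X)) q \<cdot> n (Fo X \<otimes> Fo X) A = pair e (pair e q \<cdot> n (Fo X) A) \<cdot> n (Fo X) (Fo X \<otimes> A)"
    by (rule N2) (use X Y A B f u ty in simp_all)
  have s4: "pair e e \<cdot> n (Fo X) (Fo X) = e \<cdot> Um (copy C L Fm m X)"
    unfolding e_def using E1[OF X] ty X by (simp add: e_def)
  have s5: "pair e q \<cdot> n (Fo X) A \<cdot> Um (copy C L Fm m X \<oplus> idL A) = pair (e \<cdot> Um (copy C L Fm m X)) (q \<cdot> Um (idL A)) \<cdot> n (Fo X \<otimes> Fo X) A"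
    by (rule N1') (use X Y A B f u ty in simp_all)
  have "pair (p \<cdot> f \<cdot> \<eta> Y) (pair e q \<cdot> n (Fo X) A \<cdot> Um u) \<cdot> n (Fo Y) B
     = pair (e \<cdot> Um (Fm f)) ((pair e q \<cdot> n (Fo X) A) \<cdot> Um u) \<cdot> n (Fo Y) B"
    using s1 ty f u X A by simp
  also have "\<dots> = pair (pair e e \<cdot> n (Fo X) (Fo X)) q \<cdot> n (Fo X \<otimes> Fo X) A \<cdot> Um (Fm f \<oplus> u)"
    unfolding s2 by (rule tailC[OF s3[symmetric]]) (use ty f u X A in simp_all)
  also have "\<dots> = pair (e \<cdot> Um (copy C L Fm m X)) (q \<cdot> Um (idL A)) \<cdot> n (Fo X \<otimes> Fo X) A \<cdot> Um (Fm f \<oplus> u)"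
    unfolding s4 using ty f u X A by simp
  also have "\<dots> = pair e q \<cdot> n (Fo X) A \<cdot> Um (copy C L Fm m X \<oplus> idL A) \<cdot> Um (Fm f \<oplus> u)"
    using tailC[OF s5, of "Um (Fm f \<oplus> u)"] ty f u X A by simp
  finally show ?thesis unfolding e_def p_def q_def .
qed

end

context lnl begin

abbreviation "LS \<equiv> LScat C L Fo Fm m m1"
abbreviation "US \<equiv> USm C Fo Uo Um n \<eta>"

lemma LS_ar: "\<phi> \<in> cAr LS \<longleftrightarrow> (\<exists>X A Y B f u. \<phi> = ((X,A),(Y,B),(f,u)) \<and> Ob X \<and> ObL A \<and> Ob Y \<and> ObL B \<and>
   Ar f \<and> dm f = X \<and> cd f = Y \<and> ArL u \<and> dL u = Fo X \<otimes> A \<and> cL u = B)"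
  unfolding LScat_def hom_def by auto

lemma US_eq: "Ob X \<Longrightarrow> ObL A \<Longrightarrow> ArL u \<Longrightarrow> dL u = Fo X \<otimes> A \<Longrightarrow>
  US ((X,A),(Y,B),(f,u)) = ((X,Uo A),(Y,Uo B),(f, pair (pr1 X (Uo A) \<cdot> \<eta> X) (pr2 X (Uo A)) \<cdot> n (Fo X) A \<cdot> Um u))"
  unfolding USm_def USo_def src_def tgt_def base_def fibc_def by simp

lemma part_functor: "is_functor LS (Scat C) (USo Uo) US"
  unfolding is_functor_def
proof (intro conjI ballI impI)
  fix a assume "a \<in> cOb LS" then show "USo Uo a \<in> cOb (Scat C)"
    by (auto simp: LScat_def Scat_def USo_def)
next
  fix \<phi> assume "\<phi> \<in> cAr LS"
  then obtain X A Y B f u where \<phi>: "\<phi> = ((X,A),(Y,B),(f,u))" and t: "Ob X" "ObL A" "Ob Y" "ObL B"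
   "Ar f" "dm f = X" "cd f = Y" "ArL u" "dL u = Fo X \<otimes> A" "cL u = B" unfolding LS_ar by blast
  show "US \<phi> \<in> hom (Scat C) (USo Uo (cDom LS \<phi>)) (USo Uo (cCod LS \<phi>))"
    unfolding \<phi> US_eq[OF t(1,2,8,9)] using t
    by (simp add: hom_def Scat_def LScat_def USo_def src_def tgt_def)
next
  fix a assume "a \<in> cOb LS"
  then obtain X A where a: "a = (X,A)" "Ob X" "ObL A" by (auto simp: LScat_def)
  have e: "cId LS a = ((X,A),(X,A),(idC X, weak C L Fm m1 X \<oplus> idL A))"
    by (simp add: LScat_def a)
  show "US (cId LS a) = cId (Scat C) (USo Uo a)"
    unfolding e using a IDL[OF a(2,3)]
    by (simp add: Scat_def USo_def US_eq)
next
  fix \<phi> \<psi> assume "\<phi> \<in> cAr LS" "\<psi> \<in> cAr LS" and cc: "cCod LS \<phi> = cDom LS \<psi>"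
  from \<open>\<phi> \<in> cAr LS\<close> obtain X A Y B f u where \<phi>: "\<phi> = ((X,A),(Y,B),(f,u))" and t: "Ob X" "ObL A" "Ob Y" "ObL B"
   "Ar f" "dm f = X" "cd f = Y" "ArL u" "dL u = Fo X \<otimes> A" "cL u = B" unfolding LS_ar by blast
  from \<open>\<psi> \<in> cAr LS\<close> obtain Y' B' Z D g v where \<psi>: "\<psi> = ((Y',B'),(Z,D),(g,v))" and t': "Ob Y'" "ObL B'" "Ob Z" "ObL D"
   "Ar g" "dm g = Y'" "cd g = Z" "ArL v" "dL v = Fo Y' \<otimes> B'" "cL v = D" unfolding LS_ar by blast
  have YB: "Y' = Y" "B' = B" using cc unfolding \<phi> \<psi> by (simp_all add: LScat_def src_def tgt_def)
  have e: "cCmp LS \<phi> \<psi> = ((X,A),(Z,D),(f \<cdot> g, ((copy C L Fm m X \<oplus> idL A) \<bullet> (Fm f \<oplus> u)) \<bullet> v))"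
    unfolding \<phi> \<psi> by (simp add: LScat_def src_def tgt_def base_def fibc_def)
  have ty: "ArL (((copy C L Fm m X \<oplus> idL A) \<bullet> (Fm f \<oplus> u)) \<bullet> v)" 
     "dL (((copy C L Fm m X \<oplus> idL A) \<bullet> (Fm f \<oplus> u)) \<bullet> v) = Fo X \<otimes> A"
    using t t' YB by simp_all
  show "US (cCmp LS \<phi> \<psi>) = cCmp (Scat C) (US \<phi>) (US \<psi>)"
    apply (subst e)
    unfolding US_eq[OF t(1,2) ty] \<phi> \<psi> YB US_eq[OF t(1,2,8,9)] US_eq[OF t(3,4) t'(8) t'(9)[unfolded YB]]
    using tailC[OF COMP[OF t(1,3,2,4) t(5-10)], of "Um v"] t t' YB
    by (simp add: Scat_def src_def tgt_def base_def fibc_def)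
qed

lemma part_cart: "Ar f \<Longrightarrow> ObL B \<Longrightarrow> US (lscart C L Fm m1 f B) = scart C f (Uo B)"
  unfolding lscart_def scart_def
  by (subst US_eq) (simp_all add: IDL)

end

context lnl begin

lemma pair_fold: "Ar h \<Longrightarrow> Ob Y \<Longrightarrow> Ob Z \<Longrightarrow> cd h = prd Y Z \<Longrightarrow> pair (h \<cdot> pr1 Y Z) (h \<cdot> pr2 Y Z) = h"
  using C_pair_uniq by metis

lemma pair_fold2: "Ar w \<Longrightarrow> Ar q \<Longrightarrow> cd w = dm q \<Longrightarrow> Ob Y \<Longrightarrow> Ob Z \<Longrightarrow> cd q = prd Y Z \<Longrightarrow>
   pair (w \<cdot> q \<cdot> pr1 Y Z) (w \<cdot> q \<cdot> pr2 Y Z) = w \<cdot> q"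
  using pair_fold[of "w \<cdot> q" Y Z] by simp

lemma NAT:
  assumes X: "Ob X" and o: "ObL A" "ObL A'" "ObL B" "ObL B'"
    and u: "ArL u" "dL u = Fo X \<otimes> A" "cL u = A'" and v: "ArL v" "dL v = Fo X \<otimes> B" "cL v = B'"
    and p: "Ar p" "cd p = X" and ab: "Ar a" "Ar b" "dm a = dm p" "dm b = dm p" "cd a = Uo A" "cd b = Uo B"
  shows "pair (pair (p \<cdot> \<eta> X) a \<cdot> n (Fo X) A \<cdot> Um u) (pair (p \<cdot> \<eta> X) b \<cdot> n (Fo X) B \<cdot> Um v) \<cdot> n A' B'
    = pair (p \<cdot> \<eta> X) (pair a b \<cdot> n A B) \<cdot> n (Fo X) (A \<otimes> B) \<cdot> Um (copy C L Fm m X \<oplus> idL (A \<otimes> B))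
       \<cdot> Um (idL (Fo X) \<oplus> mSym L (Fo X) A \<oplus> idL B) \<cdot> Um (u \<oplus> v)"
proof -
  define e where "e = p \<cdot> \<eta> X"
  have te: "Ar e" "dm e = dm p" "cd e = Uo (Fo X)" unfolding e_def using X p by simp_all
  note ok = X o u v p ab te
  have s1: "pair ((pair e a \<cdot> n (Fo X) A) \<cdot> Um u) ((pair e b \<cdot> n (Fo X) B) \<cdot> Um v) \<cdot> n A' B'
     = pair (pair e a \<cdot> n (Fo X) A) (pair e b \<cdot> n (Fo X) B) \<cdot> n (Fo X \<otimes> A) (Fo X \<otimes> B) \<cdot> Um (u \<oplus> v)"
    by (rule N1'[symmetric]) (use ok in simp_all)
  have s2: "pair (pair e e \<cdot> n (Fo X) (Fo X)) (pair a b \<cdot> n A B) \<cdot> n (Fo X \<otimes> Fo X) (A \<otimes> B)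
      \<cdot> Um ((idL (Fo X) \<oplus> mSym L (Fo X) A) \<oplus> idL B)
     = pair (pair e a \<cdot> n (Fo X) A) (pair e b \<cdot> n (Fo X) B) \<cdot> n (Fo X \<otimes> A) (Fo X \<otimes> B)"
    by (rule interchange) (use ok in simp_all)
  have s3: "pair e e \<cdot> n (Fo X) (Fo X) = e \<cdot> Um (copy C L Fm m X)"
    unfolding e_def using E1[OF X] X p by simp
  have s4: "pair e (pair a b \<cdot> n A B) \<cdot> n (Fo X) (A \<otimes> B) \<cdot> Um (copy C L Fm m X \<oplus> idL (A \<otimes> B))
     = pair (e \<cdot> Um (copy C L Fm m X)) ((pair a b \<cdot> n A B) \<cdot> Um (idL (A \<otimes> B))) \<cdot> n (Fo X \<otimes> Fo X) (A \<otimes> B)"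
    by (rule N1') (use ok in simp_all)
  have "pair (pair e a \<cdot> n (Fo X) A \<cdot> Um u) (pair e b \<cdot> n (Fo X) B \<cdot> Um v) \<cdot> n A' B'
     = pair (pair e a \<cdot> n (Fo X) A) (pair e b \<cdot> n (Fo X) B) \<cdot> n (Fo X \<otimes> A) (Fo X \<otimes> B) \<cdot> Um (u \<oplus> v)"
    using s1 ok by simp
  also have "\<dots> = pair (pair e e \<cdot> n (Fo X) (Fo X)) (pair a b \<cdot> n A B) \<cdot> n (Fo X \<otimes> Fo X) (A \<otimes> B)
      \<cdot> Um (idL (Fo X) \<oplus> mSym L (Fo X) A \<oplus> idL B) \<cdot> Um (u \<oplus> v)"
    using tailC[OF s2, of "Um (u \<oplus> v)"] ok by simp
  also have "\<dots> = pair (e \<cdot> Um (copy C L Fm m X)) (pair a b \<cdot> n A B) \<cdot> n (Fo X \<otimes> Fo X) (A \<otimes> B)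
      \<cdot> Um (idL (Fo X) \<oplus> mSym L (Fo X) A \<oplus> idL B) \<cdot> Um (u \<oplus> v)"
    unfolding s3 ..
  also have "\<dots> = pair e (pair a b \<cdot> n A B) \<cdot> n (Fo X) (A \<otimes> B) \<cdot> Um (copy C L Fm m X \<oplus> idL (A \<otimes> B))
       \<cdot> Um (idL (Fo X) \<oplus> mSym L (Fo X) A \<oplus> idL B) \<cdot> Um (u \<oplus> v)"
    using tailC[OF s4, of "Um (idL (Fo X) \<oplus> mSym L (Fo X) A \<oplus> idL B) \<cdot> Um (u \<oplus> v)"] ok by simp
  finally show ?thesis unfolding e_def .
qed

abbreviation "LF X \<equiv> LSfib C L Fo Fm m m1 X"

lemma LF_simps: "cOb (LF X) = {X} \<times> cOb L"
  "cAr (LF X) = {\<phi> \<in> cAr LS. fst (src \<phi>) = X \<and> fst (tgt \<phi>) = X \<and> base \<phi> = idC X}"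
  "cDom (LF X) = src" "cCod (LF X) = tgt" "cId (LF X) = cId LS" "cCmp (LF X) = cCmp LS"
  "mTns (LF X) = (\<lambda>a b. (X, snd a \<otimes> snd b))"
  "mUnt (LF X) = (X, mUnt L)"
  "mTnsA (LF X) = (\<lambda>\<phi> \<psi>. ((X, snd (src \<phi>) \<otimes> snd (src \<psi>)), (X, snd (tgt \<phi>) \<otimes> snd (tgt \<psi>)),
        (idC X,
         ((copy C L Fm m X \<oplus> idL (snd (src \<phi>) \<otimes> snd (src \<psi>))) \<bullet>
           ((idL (Fo X) \<oplus> mSym L (Fo X) (snd (src \<phi>))) \<oplus> idL (snd (src \<psi>)))) \<bullet> (fibc \<phi> \<oplus> fibc \<psi>))))"
  "mSym (LF X) = (\<lambda>a b. ((X, snd a \<otimes> snd b), (X, snd b \<otimes> snd a),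
        (idC X, weak C L Fm m1 X \<oplus> mSym L (snd a) (snd b))))"
  unfolding LSfib_def Let_def by (simp_all add: LScat_def)

lemma SF_simps: "cOb (Sfib C X) = {X} \<times> cOb C"
  "cAr (Sfib C X) = {\<phi> \<in> cAr (Scat C). fst (src \<phi>) = X \<and> fst (tgt \<phi>) = X \<and> base \<phi> = idC X}"
  "cDom (Sfib C X) = src" "cCod (Sfib C X) = tgt" "cId (Sfib C X) = cId (Scat C)" "cCmp (Sfib C X) = cCmp (Scat C)"
  "mTns (Sfib C X) = (\<lambda>a b. (X, prd (snd a) (snd b)))"
  "mTnsA (Sfib C X) = (\<lambda>\<phi> \<psi>. ((X, prd (snd (src \<phi>)) (snd (src \<psi>))), (X, prd (snd (tgt \<phi>)) (snd (tgt \<psi>))),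
        (idC X, pair
           (prod_arr C (idC X) (pr1 (snd (src \<phi>)) (snd (src \<psi>))) \<cdot> fibc \<phi>)
           (prod_arr C (idC X) (pr2 (snd (src \<phi>)) (snd (src \<psi>))) \<cdot> fibc \<psi>))))"
  "mUnt (Sfib C X) = (X, trm)"
  "mSym (Sfib C X) = (\<lambda>a b. ((X, prd (snd a) (snd b)), (X, prd (snd b) (snd a)),
        (idC X, pr2 X (prd (snd a) (snd b)) \<cdot> cswap C (snd a) (snd b))))"
  unfolding Sfib_def by (simp_all add: Scat_def)

lemma LF_ar: "Ob X \<Longrightarrow> \<phi> \<in> cAr (LF X) \<longleftrightarrow> (\<exists>A B u. \<phi> = ((X,A),(X,B),(idC X,u)) \<and> ObL A \<and> ObL B \<and>
   ArL u \<and> dL u = Fo X \<otimes> A \<and> cL u = B)"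
  unfolding LF_simps LS_ar by (auto simp: src_def tgt_def base_def)

lemma part_fib: "Ob X \<Longrightarrow> sym_lax_monoidal (LF X) (Sfib C X) (USo Uo) US (US_mult C L Uo n X) (US_unit C L Uo n1 X)"
  unfolding sym_lax_monoidal_def
proof (intro conjI ballI)
  assume X: "Ob X"
  have PF: "is_functor LS (Scat C) (USo Uo) US" by (rule part_functor)
  show "is_functor (LF X) (Sfib C X) (USo Uo) US"
    unfolding is_functor_def
  proof (intro conjI ballI impI)
    fix a assume "a \<in> cOb (LF X)" then show "USo Uo a \<in> cOb (Sfib C X)"
      using X by (auto simp: LF_simps SF_simps USo_def)
  next
    fix \<phi> assume "\<phi> \<in> cAr (LF X)"
    then obtain A B u where \<phi>: "\<phi> = ((X,A),(X,B),(idC X,u))" and t: "ObL A" "ObL B"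
     "ArL u" "dL u = Fo X \<otimes> A" "cL u = B" unfolding LF_ar[OF X] by blast
    have "\<phi> \<in> cAr LS" unfolding \<phi> LS_ar using X t by auto
    then have "US \<phi> \<in> hom (Scat C) (USo Uo (cDom LS \<phi>)) (USo Uo (cCod LS \<phi>))"
      using PF unfolding is_functor_def by blast
    then show "US \<phi> \<in> hom (Sfib C X) (USo Uo (cDom (LF X) \<phi>)) (USo Uo (cCod (LF X) \<phi>))"
      unfolding hom_def LF_simps SF_simps \<phi> US_eq[OF X t(1,3,4)]
      by (simp add: LScat_def Scat_def src_def tgt_def base_def USo_def)
  next
    fix a assume "a \<in> cOb (LF X)"
    then have "a \<in> cOb LS" using X by (auto simp: LF_simps LScat_def)
    then show "US (cId (LF X) a) = cId (Sfib C X) (USo Uo a)"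
      using PF unfolding is_functor_def LF_simps SF_simps by blast
  next
    fix f g assume "f \<in> cAr (LF X)" "g \<in> cAr (LF X)" "cCod (LF X) f = cDom (LF X) g"
    then have "f \<in> cAr LS" "g \<in> cAr LS" "cCod LS f = cDom LS g" by (auto simp: LF_simps LScat_def)
    then show "US (cCmp (LF X) f g) = cCmp (Sfib C X) (US f) (US g)"
      using PF unfolding is_functor_def LF_simps SF_simps by blast
  qed
next
  fix a b assume X: "Ob X" and a: "a \<in> cOb (LF X)" and b: "b \<in> cOb (LF X)"
  show "US_mult C L Uo n X a b \<in> hom (Sfib C X) (mTns (Sfib C X) (USo Uo a) (USo Uo b)) (USo Uo (mTns (LF X) a b))"
    using X a b unfolding hom_def LF_simps SF_simps
    by (auto simp: US_mult_def hom_def Scat_def USo_def src_def tgt_def base_def)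
next
  assume X: "Ob X"
  show "US_unit C L Uo n1 X \<in> hom (Sfib C X) (mUnt (Sfib C X)) (USo Uo (mUnt (LF X)))"
    using X unfolding hom_def LF_simps SF_simps
    by (auto simp: US_unit_def hom_def Scat_def USo_def src_def tgt_def base_def)
next
  fix \<phi> \<psi> assume X: "Ob X" and "\<phi> \<in> cAr (LF X)" "\<psi> \<in> cAr (LF X)"
  then obtain A A' u B B' v where \<phi>: "\<phi> = ((X,A),(X,A'),(idC X,u))" and \<psi>: "\<psi> = ((X,B),(X,B'),(idC X,v))"
    and t: "ObL A" "ObL A'" "ArL u" "dL u = Fo X \<otimes> A" "cL u = A'" "ObL B" "ObL B'" "ArL v" "dL v = Fo X \<otimes> B" "cL v = B'"
    unfolding LF_ar[OF X] by blast
  show "cCmp (Sfib C X) (mTnsA (Sfib C X) (US \<phi>) (US \<psi>)) (US_mult C L Uo n X (cCod (LF X) \<phi>) (cCod (LF X) \<psi>)) =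
       cCmp (Sfib C X) (US_mult C L Uo n X (cDom (LF X) \<phi>) (cDom (LF X) \<psi>)) (US (mTnsA (LF X) \<phi> \<psi>))"
    unfolding LF_simps SF_simps \<phi> \<psi> using X t
    apply (simp add: US_eq US_mult_def Scat_def src_def tgt_def base_def fibc_def)
    using NAT[OF X t(1,2,6,7,3,4,5,8,9,10), of "pr1 X (prd (Uo A) (Uo B))" "pr2 X (prd (Uo A) (Uo B)) \<cdot> pr1 (Uo A) (Uo B)"
       "pr2 X (prd (Uo A) (Uo B)) \<cdot> pr2 (Uo A) (Uo B)"]
    by (simp add: pair_fold[of "pr2 X (prd (Uo A) (Uo B))" "Uo A" "Uo B"])
next
  fix a b c assume X: "Ob X" and "a \<in> cOb (LF X)" "b \<in> cOb (LF X)" "c \<in> cOb (LF X)"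
  then obtain A B D where a: "a = (X,A)" "b = (X,B)" "c = (X,D)" "ObL A" "ObL B" "ObL D"
    unfolding LF_simps by auto
  show "cCmp (Sfib C X) (mTnsA (Sfib C X) (US_mult C L Uo n X a b) (cId (Sfib C X) (USo Uo c)))
        (US_mult C L Uo n X (mTns (LF X) a b) c) =
       cCmp (Sfib C X) (mTnsA (Sfib C X) (cId (Sfib C X) (USo Uo a)) (US_mult C L Uo n X b c))
        (US_mult C L Uo n X a (mTns (LF X) b c))"
    unfolding LF_simps SF_simps a(1-3) using X a(4-6)
    apply (simp add: US_mult_def USo_def Scat_def src_def tgt_def base_def fibc_def)
    using N2[of "pr2 X (prd (Uo A) (prd (Uo B) (Uo D))) \<cdot> pr1 (Uo A) (prd (Uo B) (Uo D))"
       "pr2 X (prd (Uo A) (prd (Uo B) (Uo D))) \<cdot> pr2 (Uo A) (prd (Uo B) (Uo D)) \<cdot> pr1 (Uo B) (Uo D)"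
       "pr2 X (prd (Uo A) (prd (Uo B) (Uo D))) \<cdot> pr2 (Uo A) (prd (Uo B) (Uo D)) \<cdot> pr2 (Uo B) (Uo D)" A B D]
    by (simp add: pair_fold2[of "pr2 X (prd (Uo A) (prd (Uo B) (Uo D)))" "pr2 (Uo A) (prd (Uo B) (Uo D))" "Uo B" "Uo D"])
next
  fix a assume X: "Ob X" and "a \<in> cOb (LF X)"
  then obtain A where a: "a = (X,A)" "ObL A" unfolding LF_simps by auto
  show "cCmp (Sfib C X) (mTnsA (Sfib C X) (US_unit C L Uo n1 X) (cId (Sfib C X) (USo Uo a)))
        (US_mult C L Uo n X (mUnt (LF X)) a) = cId (Sfib C X) (USo Uo a)"
    unfolding LF_simps SF_simps a(1) using X a(2)
    apply (simp add: US_mult_def US_unit_def USo_def Scat_def src_def tgt_def base_def fibc_def)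
    using N4[of "pr2 X (Uo A)" A] by simp
next
  fix a assume X: "Ob X" and "a \<in> cOb (LF X)"
  then obtain A where a: "a = (X,A)" "ObL A" unfolding LF_simps by auto
  show "cCmp (Sfib C X) (mTnsA (Sfib C X) (cId (Sfib C X) (USo Uo a)) (US_unit C L Uo n1 X))
        (US_mult C L Uo n X a (mUnt (LF X))) = cId (Sfib C X) (USo Uo a)"
    unfolding LF_simps SF_simps a(1) using X a(2)
    apply (simp add: US_mult_def US_unit_def USo_def Scat_def src_def tgt_def base_def fibc_def)
    using N4r[of "pr2 X (Uo A)" A] by simp
next
  fix a b assume X: "Ob X" and "a \<in> cOb (LF X)" "b \<in> cOb (LF X)"
  then obtain A B where a: "a = (X,A)" "b = (X,B)" "ObL A" "ObL B"
    unfolding LF_simps by auto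
  let ?W = "prd (Uo A) (Uo B)"
  have f1: "pair (pr1 X ?W \<cdot> \<eta> X) (pr2 X ?W \<cdot> n A B) \<cdot> n (Fo X) (A \<otimes> B) \<cdot> Um (weak C L Fm m1 X \<oplus> mSym L A B)
      = pair ((pr1 X ?W \<cdot> \<eta> X) \<cdot> Um (weak C L Fm m1 X)) ((pr2 X ?W \<cdot> n A B) \<cdot> Um (mSym L A B)) \<cdot> n (mUnt L) (B \<otimes> A)"
    by (rule N1') (use X a(3,4) in simp_all)
  show "cCmp (Sfib C X) (mSym (Sfib C X) (USo Uo a) (USo Uo b)) (US_mult C L Uo n X b a) =
       cCmp (Sfib C X) (US_mult C L Uo n X a b) (US (mSym (LF X) a b))"
    unfolding LF_simps SF_simps a(1,2) using X a(3,4)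
    apply (simp add: US_eq US_mult_def USo_def Scat_def src_def tgt_def base_def fibc_def)
    using f1 N4[of "pr2 X ?W \<cdot> n A B \<cdot> Um (mSym L A B)" "B \<otimes> A"] E2[OF X]
        N3[of "pr2 X ?W \<cdot> pr1 (Uo A) (Uo B)" "pr2 X ?W \<cdot> pr2 (Uo A) (Uo B)" A B] X a(3,4)
    by (simp add: pair_fold[of "pr2 X ?W" "Uo A" "Uo B"])
qed

end

theorem proposition3p11:
  fixes C :: "('o,'m) ccat" and L :: "('p,'n) smc"
    and Fo :: "'o \<Rightarrow> 'p" and Fm :: "'m \<Rightarrow> 'n" and Uo :: "'p \<Rightarrow> 'o" and Um :: "'n \<Rightarrow> 'm"
    and m :: "'o \<Rightarrow> 'o \<Rightarrow> 'n" and m1 :: "'n" and n :: "'p \<Rightarrow> 'p \<Rightarrow> 'm" and n1 :: "'m"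
    and \<eta> :: "'o \<Rightarrow> 'm" and \<epsilon> :: "'p \<Rightarrow> 'n"
  assumes "lnl_adjunction C L Fo Fm Uo Um m m1 n n1 \<eta> \<epsilon>"
  shows "is_functor (LScat C L Fo Fm m m1) (Scat C) (USo Uo) (USm C Fo Uo Um n \<eta>)
    \<and> (\<forall>a\<in>cOb (LScat C L Fo Fm m m1). fst (USo Uo a) = fst a)
    \<and> (\<forall>\<phi>\<in>cAr (LScat C L Fo Fm m m1). base (USm C Fo Uo Um n \<eta> \<phi>) = base \<phi>)
    \<and> (\<forall>f\<in>cAr C. \<forall>B\<in>cOb L. USm C Fo Uo Um n \<eta> (lscart C L Fm m1 f B) = scart C f (Uo B))
    \<and> (\<forall>X\<in>cOb C. sym_lax_monoidal (LSfib C L Fo Fm m m1 X) (Sfib C X) (USo Uo) (USm C Fo Uo Um n \<eta>)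
                    (US_mult C L Uo n X) (US_unit C L Uo n1 X))"
proof -
  interpret lnl C L Fo Fm Uo Um m m1 n n1 \<eta> \<epsilon> by (rule lnl.intro) (rule assms)
  show ?thesis
    using part_functor part_cart part_fib by (auto simp: USo_def USm_def base_def)
qed

end
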